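(* For every $m\ge 2$, the number of blockers in $CK(2m)$ is $m\cdot 2^{m-1}$.
   Context: $CK(2m)$ denotes the complete convex geometric graph whose vertices are the $2m$ vertices of a convex polygon, labelled cyclically $0,1,\dots,2m-1$ (labels modulo $2m$), and whose edges are all straight segments between pairs of vertices. Two edges with four distinct endpoints cross iff their endpoints alternate in the cyclic order. A simple perfect matching (SPM) is a set of $m$ edges that are pairwise disjoint (no common endpoint and no crossing). A blocking set is a set of edges containing at least one edge of every SPM. A blocker is a blocking set with exactly $m$ edges. *)

theory Defs
  imports Main
begin

definition ck_vertices :: "nat \<Rightarrow> nat set" where
  "ck_vertices m = {0..<2*m}"

definition ck_edges :: "nat \<Rightarrow> nat set set" where
  "ck_edges m = {e. e \<subseteq> ck_vertices m \<and> card e = 2}"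

text \<open>Four distinct points a,b,c,d alternate in the cyclic order 0,1,...,2m-1
  iff, w.r.t. the linear order of labels, exactly one of c, d lies strictly
  between a and b (alternation is invariant under cyclic rotation, so cutting
  the cycle at 0 loses nothing).\<close>
definition strictly_between :: "nat \<Rightarrow> nat \<Rightarrow> nat \<Rightarrow> bool" where
  "strictly_between a b x \<longleftrightarrow> min a b < x \<and> x < max a b"

definition edges_cross :: "nat set \<Rightarrow> nat set \<Rightarrow> bool" where
  "edges_cross e f \<longleftrightarrow> (\<exists>a b c d. e = {a, b} \<and> f = {c, d} \<and>
      distinct [a, b, c, d] \<and>
      (strictly_between a b c \<noteq> strictly_between a b d))"

definition edges_disjoint :: "nat set \<Rightarrow> nat set \<Rightarrow> bool" where
  "edges_disjoint e f \<longleftrightarrow> e \<inter> f = {} \<and> \<not> edges_cross e f"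

definition is_SPM :: "nat \<Rightarrow> nat set set \<Rightarrow> bool" where
  "is_SPM m M \<longleftrightarrow> M \<subseteq> ck_edges m \<and> card M = m \<and>
     (\<forall>e\<in>M. \<forall>f\<in>M. e \<noteq> f \<longrightarrow> edges_disjoint e f)"

definition is_blocking_set :: "nat \<Rightarrow> nat set set \<Rightarrow> bool" where
  "is_blocking_set m B \<longleftrightarrow> B \<subseteq> ck_edges m \<and> (\<forall>M. is_SPM m M \<longrightarrow> B \<inter> M \<noteq> {})"

definition is_blocker :: "nat \<Rightarrow> nat set set \<Rightarrow> bool" where
  "is_blocker m B \<longleftrightarrow> is_blocking_set m B \<and> card B = m"

end

theory Submission
  imports Defs
begin

lemma sb_sym: "strictly_between a b x = strictly_between b a x"
  by (auto simp: strictly_between_def)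

lemma cross_iff:
  assumes "a \<noteq> b" "c \<noteq> d"
  shows "edges_cross {a,b} {c,d} \<longleftrightarrow> distinct [a,b,c,d] \<and>
     (strictly_between a b c \<noteq> strictly_between a b d)"
proof
  assume "edges_cross {a,b} {c,d}"
  then obtain a' b' c' d' where h: "{a,b} = {a',b'}" "{c,d} = {c',d'}" "distinct [a',b',c',d']"
    "strictly_between a' b' c' \<noteq> strictly_between a' b' d'"
    unfolding edges_cross_def by blast
  from h(1) have h1: "(a = a' \<and> b = b') \<or> (a = b' \<and> b = a')" by (auto simp: doubleton_eq_iff)
  from h(2) have h2: "(c = c' \<and> d = d') \<or> (c = d' \<and> d = c')" by (auto simp: doubleton_eq_iff)
  show "distinct [a,b,c,d] \<and> (strictly_between a b c \<noteq> strictly_between a b d)"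
    using h1 h2 h(3,4) sb_sym by auto
next
  assume "distinct [a,b,c,d] \<and> (strictly_between a b c \<noteq> strictly_between a b d)"
  then show "edges_cross {a,b} {c,d}" unfolding edges_cross_def by blast
qed

lemma card2_ex: "card e = 2 \<Longrightarrow> \<exists>a b. a \<noteq> b \<and> e = {a,b}"
  by (auto simp: card_2_iff)

definition rot :: "nat \<Rightarrow> nat \<Rightarrow> nat \<Rightarrow> nat" where
  "rot m k v = (v + k) mod (2*m)"

lemma sb_shift1: "strictly_between (Suc a) (Suc b) (Suc c) = strictly_between a b c"
  by (auto simp: strictly_between_def)

lemma rot1_sb:
  assumes "distinct [a,b,c,d]" "a < 2*m" "b < 2*m" "c < 2*m" "d < 2*m"
  shows "(strictly_between (rot m 1 a) (rot m 1 b) (rot m 1 c) \<noteq> strictly_between (rot m 1 a) (rot m 1 b) (rot m 1 d))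
     = (strictly_between a b c \<noteq> strictly_between a b d)"
proof -
  have r: "\<And>v. v < 2*m \<Longrightarrow> rot m 1 v = (if v = 2*m - 1 then 0 else Suc v)"
    unfolding rot_def by (auto simp: mod_if)
  let ?n = "2*m - 1"
  consider "a = ?n" | "b = ?n" | "c = ?n" | "d = ?n" | "a \<noteq> ?n" "b \<noteq> ?n" "c \<noteq> ?n" "d \<noteq> ?n" by blast
  then show ?thesis
  proof cases
    case 1
    then have "b \<noteq> ?n" "c \<noteq> ?n" "d \<noteq> ?n" using assms(1) by auto
    then show ?thesis using 1 assms unfolding r[OF assms(2)] r[OF assms(3)] r[OF assms(4)] r[OF assms(5)]
      by (simp add: strictly_between_def) linarith
  next
    case 2
    then have "a \<noteq> ?n" "c \<noteq> ?n" "d \<noteq> ?n" using assms(1) by auto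
    then show ?thesis using 2 assms unfolding r[OF assms(2)] r[OF assms(3)] r[OF assms(4)] r[OF assms(5)]
      by (simp add: strictly_between_def) linarith
  next
    case 3
    then have "a \<noteq> ?n" "b \<noteq> ?n" "d \<noteq> ?n" using assms(1) by auto
    then show ?thesis using 3 assms unfolding r[OF assms(2)] r[OF assms(3)] r[OF assms(4)] r[OF assms(5)]
      by (simp add: strictly_between_def) linarith
  next
    case 4
    then have "a \<noteq> ?n" "b \<noteq> ?n" "c \<noteq> ?n" using assms(1) by auto
    then show ?thesis using 4 assms unfolding r[OF assms(2)] r[OF assms(3)] r[OF assms(4)] r[OF assms(5)]
      by (simp add: strictly_between_def) linarith
  next
    case 5
    then show ?thesis using assms unfolding r[OF assms(2)] r[OF assms(3)] r[OF assms(4)] r[OF assms(5)]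
      by (simp add: sb_shift1)
  qed
qed

lemma rot_lt: "0 < m \<Longrightarrow> rot m k v < 2*m"
  unfolding rot_def by simp

lemma rot_Suc: "rot m (Suc k) v = rot m 1 (rot m k v)"
  unfolding rot_def by (simp add: mod_Suc_eq)

lemma rot_add: "rot m a (rot m b v) = rot m (a + b) v"
  unfolding rot_def by (simp add: mod_add_left_eq add.assoc add.commute[of a b])

lemma rot_inv: "v < 2*m \<Longrightarrow> rot m (2*m - k mod (2*m)) (rot m k v) = v"
proof -
  assume v: "v < 2*m"
  have "rot m (2*m - k mod (2*m)) (rot m k v) = rot m (2*m - k mod (2*m) + k) v" by (simp add: rot_add)
  also have "2*m - k mod (2*m) + k = 2*m + (k - k mod (2*m))"
    using mod_le_divisor[of "2*m" k] v by (cases "m = 0") (auto simp: mod_less_eq_dividend)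
  also have "rot m (2*m + (k - k mod (2*m))) v = v"
  proof -
    have "k - k mod (2*m) = 2*m * (k div (2*m))" by (simp add: minus_mod_eq_mult_div)
    then have "2*m + (k - k mod (2*m)) = 2*m * Suc (k div (2*m))" by simp
    then show ?thesis unfolding rot_def using v by (simp only: mod_mult_self2) simp
  qed
  finally show ?thesis .
qed

lemma rot_inj: "inj_on (rot m k) {..<2*m}"
  by (rule inj_on_inverseI[where g = "rot m (2*m - k mod (2*m))"]) (simp add: rot_inv)

lemma rot0: "v < 2*m \<Longrightarrow> rot m 0 v = v"
  unfolding rot_def by simp

lemma rot_mod: "rot m (k mod (2*m)) v = rot m k v"
  unfolding rot_def by (simp add: mod_add_right_eq)

lemma rot1_cross:
  assumes "e \<subseteq> {..<2*m}" "card e = 2" "f \<subseteq> {..<2*m}" "card f = 2"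
  shows "edges_cross (rot m 1 ` e) (rot m 1 ` f) = edges_cross e f"
proof -
  obtain a b where ab: "a \<noteq> b" "e = {a,b}" using card2_ex[OF assms(2)] by blast
  obtain c d where cd: "c \<noteq> d" "f = {c,d}" using card2_ex[OF assms(4)] by blast
  have lt: "a < 2*m" "b < 2*m" "c < 2*m" "d < 2*m" using assms ab cd by auto
  have inj: "\<And>x y. x < 2*m \<Longrightarrow> y < 2*m \<Longrightarrow> rot m 1 x = rot m 1 y \<longleftrightarrow> x = y"
    using rot_inj[of m 1] by (auto dest: inj_onD)
  have d1: "distinct [rot m 1 a, rot m 1 b, rot m 1 c, rot m 1 d] = distinct [a,b,c,d]"
    using lt inj by auto
  show ?thesis
    unfolding ab cd image_insert image_empty
    using cross_iff[OF ab(1) cd(1)] cross_iff[of "rot m 1 a" "rot m 1 b" "rot m 1 c" "rot m 1 d"]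
      d1 rot1_sb[OF _ lt] inj lt ab(1) cd(1)
    by auto
qed

lemma rot_image_sub: "0 < m \<Longrightarrow> rot m k ` e \<subseteq> {..<2*m}"
  using rot_lt by auto

lemma rot_card: "e \<subseteq> {..<2*m} \<Longrightarrow> card (rot m k ` e) = card e"
  using rot_inj inj_on_subset card_image by blast

lemma rot_cross:
  assumes "e \<subseteq> {..<2*m}" "card e = 2" "f \<subseteq> {..<2*m}" "card f = 2" "0 < m"
  shows "edges_cross (rot m k ` e) (rot m k ` f) = edges_cross e f"
proof (induction k)
  case 0
  have g: "rot m 0 ` g = g" if "g \<subseteq> {..<2*m}" for g
  proof -
    have "rot m 0 ` g = id ` g" by (rule image_cong) (use that rot0 in auto)
    then show ?thesis by simp
  qed
  have "rot m 0 ` e = e" "rot m 0 ` f = f" using g assms by auto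
  then show ?case by simp
next
  case (Suc k)
  have i: "rot m (Suc k) ` g = rot m 1 ` (rot m k ` g)" for g
    unfolding image_image by (rule image_cong) (simp_all only: rot_Suc)
  have s: "rot m k ` e \<subseteq> {..<2*m}" "rot m k ` f \<subseteq> {..<2*m}" using rot_image_sub assms(5) by blast+
  have c: "card (rot m k ` e) = 2" "card (rot m k ` f) = 2" using rot_card assms by metis+
  have "edges_cross (rot m 1 ` (rot m k ` e)) (rot m 1 ` (rot m k ` f)) = edges_cross (rot m k ` e) (rot m k ` f)"
    by (rule rot1_cross[OF s(1) c(1) s(2) c(2)])
  then show ?case unfolding i using Suc.IH by simp
qed

definition rotS :: "nat \<Rightarrow> nat \<Rightarrow> nat set set \<Rightarrow> nat set set" where
  "rotS m k B = (\<lambda>e. rot m k ` e) ` B"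

lemma ck_edges_iff: "e \<in> ck_edges m \<longleftrightarrow> e \<subseteq> {..<2*m} \<and> card e = 2"
  by (auto simp: ck_edges_def ck_vertices_def)

lemma SPM_edge: "is_SPM m M \<Longrightarrow> e \<in> M \<Longrightarrow> e \<subseteq> {..<2*m} \<and> card e = 2"
proof -
  assume "is_SPM m M" "e \<in> M"
  then have "e \<in> ck_edges m" unfolding is_SPM_def by blast
  then show ?thesis by (simp add: ck_edges_iff)
qed

lemma rotE_ck: "0 < m \<Longrightarrow> e \<in> ck_edges m \<Longrightarrow> rot m k ` e \<in> ck_edges m"
  unfolding ck_edges_iff using rot_image_sub rot_card by metis

lemma rotE_inj: "inj_on (\<lambda>e. rot m k ` e) {e. e \<subseteq> {..<2*m}}"
  by (auto intro!: inj_onI simp: inj_on_image_eq_iff[OF rot_inj])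

lemma rot_SPM:
  assumes "0 < m" "is_SPM m M"
  shows "is_SPM m (rotS m k M)"
proof -
  have sub: "M \<subseteq> {e. e \<subseteq> {..<2*m}}" using SPM_edge[OF assms(2)] by auto
  have "card (rotS m k M) = card M"
    unfolding rotS_def by (rule card_image) (rule inj_on_subset[OF rotE_inj sub])
  then have c: "card (rotS m k M) = m" using assms by (simp add: is_SPM_def)
  have e: "rotS m k M \<subseteq> ck_edges m"
    unfolding rotS_def using SPM_edge[OF assms(2)] rotE_ck[OF assms(1)] ck_edges_iff by blast
  have d: "edges_disjoint e' f'" if A: "e' \<in> rotS m k M" "f' \<in> rotS m k M" "e' \<noteq> f'" for e' f'
  proof -
    obtain e f where ef: "e \<in> M" "f \<in> M" "e' = rot m k ` e" "f' = rot m k ` f"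
      using A(1,2) unfolding rotS_def by blast
    have ne: "e \<noteq> f" using ef A by auto
    have dj: "edges_disjoint e f" using assms(2) ef ne by (auto simp: is_SPM_def)
    have E: "e \<subseteq> {..<2*m}" "card e = 2" "f \<subseteq> {..<2*m}" "card f = 2"
      using SPM_edge[OF assms(2)] ef by auto
    have "e' \<inter> f' = {}"
    proof -
      have "e \<inter> f = {}" using dj by (simp add: edges_disjoint_def)
      then show ?thesis unfolding ef using inj_on_image_Int[OF rot_inj, where A=e and B=f] E by simp
    qed
    moreover have "\<not> edges_cross e' f'" unfolding ef
      using rot_cross[OF E assms(1)] dj by (simp add: edges_disjoint_def)
    ultimately show ?thesis by (simp add: edges_disjoint_def)
  qed
  show ?thesis using c e d by (simp add: is_SPM_def)
qed

lemma rotS_add: "rotS m a (rotS m b M) = rotS m (a + b) M"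
  unfolding rotS_def image_image by (simp add: rot_add image_image)

lemma rotS_id:
  assumes "\<forall>e\<in>M. e \<subseteq> {..<2*m}"
  shows "rotS m (2*m - k mod (2*m) + k) M = M"
proof -
  have "rot m (2*m - k mod (2*m) + k) ` e = e" if "e \<in> M" for e
  proof -
    have "rot m (2*m - k mod (2*m) + k) ` e = id ` e"
    proof (rule image_cong)
      fix x assume "x \<in> e"
      then have "x < 2*m" using assms that by auto
      then show "rot m (2*m - k mod (2*m) + k) x = id x"
        by (subst rot_add[symmetric]) (simp add: rot_inv)
    qed simp
    then show ?thesis by simp
  qed
  then show ?thesis unfolding rotS_def by simp
qed

lemma rot_blocker:
  assumes "0 < m" "is_blocker m B"
  shows "is_blocker m (rotS m k B)"
proof -
  have Bck: "B \<subseteq> ck_edges m" using assms(2) by (simp add: is_blocker_def is_blocking_set_def)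
  then have Bsub: "\<forall>e\<in>B. e \<subseteq> {..<2*m} \<and> card e = 2"
    using ck_edges_iff by blast
  have "card (rotS m k B) = card B"
    unfolding rotS_def by (rule card_image, rule inj_on_subset[OF rotE_inj]) (use Bsub in auto)
  then have c: "card (rotS m k B) = m" using assms by (simp add: is_blocker_def)
  have e: "rotS m k B \<subseteq> ck_edges m"
    unfolding rotS_def using Bck rotE_ck[OF assms(1)] by blast
  have h: "rotS m k B \<inter> M \<noteq> {}" if "is_SPM m M" for M
  proof -
    let ?k' = "2*m - k mod (2*m)"
    have M0: "is_SPM m (rotS m ?k' M)" by (rule rot_SPM[OF assms(1) that])
    then have "B \<inter> rotS m ?k' M \<noteq> {}" using assms(2) by (simp add: is_blocker_def is_blocking_set_def)
    then obtain e where e: "e \<in> B" "e \<in> rotS m ?k' M" by blast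
    have "rotS m k (rotS m ?k' M) = M"
      unfolding rotS_add using rotS_id[of M m k] SPM_edge[OF that] by (simp add: add.commute)
    then have "rot m k ` e \<in> M" using e(2) unfolding rotS_def by auto
    moreover have "rot m k ` e \<in> rotS m k B" using e(1) unfolding rotS_def by auto
    ultimately show ?thesis by blast
  qed
  show ?thesis using c e h by (simp add: is_blocker_def is_blocking_set_def)
qed

lemma cross_sym_aux:
  assumes "distinct [a,b,c,d]" "strictly_between a b c \<noteq> strictly_between a b d"
  shows "strictly_between c d a \<noteq> strictly_between c d b"
  using assms unfolding strictly_between_def
  by (cases "a < b"; cases "c < d"; simp add: min_def max_def; arith)

lemma cross_sym: "edges_cross e f = edges_cross f e"
proof -
  have *: "edges_cross f e" if H: "edges_cross e f" for e f
  proof -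
    obtain a b c d where h: "e = {a,b}" "f = {c,d}" "distinct [a,b,c,d]"
      "strictly_between a b c \<noteq> strictly_between a b d" using H unfolding edges_cross_def by blast
    have "distinct [c,d,a,b]" using h(3) by auto
    then show ?thesis unfolding edges_cross_def using h cross_sym_aux[OF h(3,4)] by blast
  qed
  show ?thesis using *[of e f] *[of f e] by blast
qed

lemma noncross_if:
  assumes "a \<noteq> b" "c \<noteq> d" "strictly_between a b c = strictly_between a b d"
  shows "\<not> edges_cross {a,b} {c,d}"
  using cross_iff[OF assms(1,2)] assms(3) by simp

lemma sum2: "a \<noteq> b \<Longrightarrow> \<Sum>{a,b} = a + (b::nat)"
  by simp

definition E :: "nat \<Rightarrow> nat \<Rightarrow> nat \<Rightarrow> nat set" where
  "E m k d = {(k + 2*m - d) mod (2*m), (k + 1 + d) mod (2*m)}"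

definition P :: "nat \<Rightarrow> nat \<Rightarrow> nat set set" where
  "P m k = (\<lambda>d. E m k d) ` {..<m}"

lemma mod_add_ne:
  assumes "0 < c" "c < n" shows "(x + c) mod n \<noteq> x mod (n::nat)"
proof
  assume "(x + c) mod n = x mod n"
  then have "n dvd (x + c - x)" using mod_eq_dvd_iff_nat[of x "x + c" n] by simp
  then have "n dvd c" by simp
  then show False using assms by (meson dvd_imp_le not_less)
qed

lemma E_ne:
  fixes m k d :: nat
  assumes "d < m" shows "(k + 2*m - d) mod (2*m) \<noteq> (k + 1 + d) mod (2*m)"
proof -
  have "k + 2*m - d = (k + 1 + d) + (2*m - 1 - 2*d)" using assms by simp
  then show ?thesis using mod_add_ne[of "2*m - 1 - 2*d" "2*m" "k+1+d"] assms by simp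
qed

lemma E_card: "d < m \<Longrightarrow> card (E m k d) = 2"
  unfolding E_def using E_ne by simp

lemma E_sub: "d < m \<Longrightarrow> E m k d \<subseteq> {..<2*m}"
  unfolding E_def by simp

lemma E_ck: "d < m \<Longrightarrow> E m k d \<in> ck_edges m"
  unfolding ck_edges_iff using E_card E_sub by simp

lemma E_sum:
  fixes m k d :: nat
  assumes "d < m" "k < m"
  shows "(\<Sum>(E m k d)) mod (2*m) = 2*k + 1"
proof -
  have "(\<Sum>(E m k d)) = (k + 2*m - d) mod (2*m) + (k + 1 + d) mod (2*m)"
    unfolding E_def using E_ne[OF assms(1)] by simp
  then have "(\<Sum>(E m k d)) mod (2*m) = ((k + 2*m - d) + (k + 1 + d)) mod (2*m)"
    by (simp add: mod_add_eq)
  also have "(k + 2*m - d) + (k + 1 + d) = (2*k + 1) + 2*m" using assms by simp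
  also have "((2*k + 1) + 2*m) mod (2*m) = (2*k+1) mod (2*m)" by (rule mod_add_self2)
  also have "(2*k+1) mod (2*m) = 2*k+1" using assms by simp
  finally show ?thesis .
qed

lemma E0: "d < m \<Longrightarrow> E m 0 d = (if d = 0 then {0, 1} else {2*m - d, d + 1})"
  unfolding E_def by auto

lemma rot_E: "d < m \<Longrightarrow> rot m k ` E m 0 d = E m k d"
proof -
  assume d: "d < m"
  have "((2*m - d) mod (2*m) + k) mod (2*m) = ((2*m - d) + k) mod (2*m)" by (rule mod_add_left_eq)
  moreover have "(2*m-d)+k = k + 2*m - d" using d by simp
  ultimately have 1: "rot m k ((0 + 2*m - d) mod (2*m)) = (k + 2*m - d) mod (2*m)"
    unfolding rot_def by simp
  have "((0 + 1 + d) mod (2*m) + k) mod (2*m) = ((0 + 1 + d) + k) mod (2*m)" by (rule mod_add_left_eq)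
  then have 2: "rot m k ((0 + 1 + d) mod (2*m)) = (k + 1 + d) mod (2*m)"
    unfolding rot_def by (simp add: add.commute add.left_commute)
  show ?thesis unfolding E_def using 1 2 by simp
qed

lemma E0_inj: "inj_on (E m 0) {..<m}"
proof (rule inj_onI)
  fix d d' assume h: "d \<in> {..<m}" "d' \<in> {..<m}" "E m 0 d = E m 0 d'"
  have "d + 1 \<in> E m 0 d" using h(1) E0[of d m] by auto
  then have "d + 1 \<in> E m 0 d'" using h(3) by simp
  then show "d = d'" using h(1,2) E0[of d' m] by (cases "d' = 0") auto
qed

lemma P0_SPM:
  assumes "0 < m" shows "is_SPM m (P m 0)"
proof -
  have c: "card (P m 0) = m" unfolding P_def using card_image[OF E0_inj] by simp
  have e: "P m 0 \<subseteq> ck_edges m" unfolding P_def using E_ck by auto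
  have d: "edges_disjoint (E m 0 d) (E m 0 d')" if "d < m" "d' < m" "d \<noteq> d'" for d d'
  proof -
    have i: "E m 0 d \<inter> E m 0 d' = {}"
    proof (cases "d = 0")
      case True then show ?thesis using that E0[of d m] E0[of d' m] by auto
    next
      case False then show ?thesis using that E0[of d m] E0[of d' m] by (cases "d' = 0") auto
    qed
    have nc: "\<not> edges_cross (E m 0 d) (E m 0 d')"
    proof (cases "d = 0")
      case True
      have "\<not> edges_cross {0, 1} {2*m-d', d'+1}"
      proof (rule noncross_if)
        show "(0::nat) \<noteq> 1" "2*m-d' \<noteq> d'+1" using that by arith+
        show "strictly_between 0 1 (2*m-d') = strictly_between 0 1 (d'+1)"
          unfolding strictly_between_def by simp
      qed
      then show ?thesis using that True E0[of d m] E0[of d' m] by simp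
    next
      case False
      note F = this
      show ?thesis
      proof (cases "d' = 0")
        case True
        have "\<not> edges_cross {2*m-d, d+1} {0, 1}"
        proof (rule noncross_if)
          show "(0::nat) \<noteq> 1" "2*m-d \<noteq> d+1" using that by arith+
          show "strictly_between (2*m-d) (d+1) 0 = strictly_between (2*m-d) (d+1) 1"
            unfolding strictly_between_def using F that by (simp add: min_def max_def)
        qed
        then show ?thesis using that True F E0[of d m] E0[of d' m] by simp
      next
        case False
        have "\<not> edges_cross {2*m-d, d+1} {2*m-d', d'+1}"
        proof (rule noncross_if)
          show "2*m-d \<noteq> d+1" "2*m-d' \<noteq> d'+1" using that by arith+
          show "strictly_between (2*m-d) (d+1) (2*m-d') = strictly_between (2*m-d) (d+1) (d'+1)"
            unfolding strictly_between_def using that by (simp add: min_def max_def) arith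
        qed
        then show ?thesis using that F False E0[of d m] E0[of d' m] by simp
      qed
    qed
    show ?thesis using i nc by (simp add: edges_disjoint_def)
  qed
  show ?thesis unfolding is_SPM_def using c e d unfolding P_def by auto
qed

lemma P_rot: "P m k = rotS m k (P m 0)"
  unfolding P_def rotS_def image_image using rot_E by auto

lemma P_SPM: "0 < m \<Longrightarrow> is_SPM m (P m k)"
  using P_rot rot_SPM P0_SPM by metis

lemma P_sum: "k < m \<Longrightarrow> e \<in> P m k \<Longrightarrow> (\<Sum>e) mod (2*m) = 2*k+1"
  unfolding P_def using E_sum by auto

lemma blocking_lower:
  assumes "0 < m" "is_blocking_set m B"
  shows "m \<le> card B"
proof -
  have "\<forall>k<m. \<exists>e. e \<in> B \<inter> P m k" using assms P_SPM unfolding is_blocking_set_def by blast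
  then obtain g where g: "\<forall>k<m. g k \<in> B \<inter> P m k" by metis
  have inj: "inj_on g {..<m}"
  proof (rule inj_onI)
    fix x y assume "x \<in> {..<m}" "y \<in> {..<m}" "g x = g y"
    then have "2*x+1 = 2*y+1" using g P_sum by (metis IntD2 lessThan_iff)
    then show "x = y" by simp
  qed
  have "B \<subseteq> Pow {..<2*m}" using assms(2) unfolding is_blocking_set_def ck_edges_iff
    using ck_edges_iff by blast
  then have fin: "finite B" using finite_subset by blast
  have "g ` {..<m} \<subseteq> B" using g by auto
  then have "card (g ` {..<m}) \<le> card B" using fin card_mono by blast
  then show ?thesis using card_image[OF inj] by simp
qed

lemma ck_finite: "finite (ck_edges m)"
proof -
  have "ck_edges m \<subseteq> Pow {..<2*m}" unfolding ck_edges_def ck_vertices_def by auto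
  then show ?thesis by (rule finite_subset) simp
qed

lemma blocker_finite: "is_blocking_set m B \<Longrightarrow> finite B"
  unfolding is_blocking_set_def using ck_finite finite_subset by blast

lemma SPM_finite: "is_SPM m M \<Longrightarrow> finite M"
  unfolding is_SPM_def using ck_finite finite_subset by blast

lemma two_m1: "2*(m-1) = 2*m - (2::nat)"
  by (simp add: right_diff_distrib')

lemma noncross_far:
  assumes "e \<subseteq> {..<n}" "card e = 2" "n \<le> c" "n \<le> d" "c \<noteq> d"
  shows "\<not> edges_cross e {c,d}"
proof -
  obtain a b where ab: "a \<noteq> b" "e = {a,b}" using card2_ex[OF assms(2)] by blast
  have "a < n" "b < n" using ab assms(1) by auto
  then have "strictly_between a b c = strictly_between a b d"
    unfolding strictly_between_def using assms by auto
  then show ?thesis using noncross_if[OF ab(1) assms(5)] ab(2) by simp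
qed

lemma SPM_extend:
  assumes "0 < m" "is_SPM (m-1) M"
  shows "is_SPM m (insert {2*m-2, 2*m-1} M)"
proof -
  let ?f = "{2*m-2, 2*m-1}"
  have ME: "\<forall>e\<in>M. e \<subseteq> {..<2*m-2} \<and> card e = 2"
    using SPM_edge[OF assms(2)] unfolding two_m1 by blast
  have fck: "?f \<in> ck_edges m" unfolding ck_edges_iff using assms(1) by auto
  have Mck: "M \<subseteq> ck_edges m"
  proof
    fix e assume "e \<in> M"
    then have "e \<subseteq> {..<2*m-2}" "card e = 2" using ME by auto
    then have "e \<subseteq> {..<2*m}" "card e = 2" by auto
    then show "e \<in> ck_edges m" unfolding ck_edges_iff by simp
  qed
  have fM: "?f \<notin> M" using ME by auto
  have fin: "finite M" by (rule SPM_finite[OF assms(2)])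
  have c: "card (insert ?f M) = m" using fM fin assms by (simp add: is_SPM_def)
  have dj: "edges_disjoint e ?f" "edges_disjoint ?f e" if "e \<in> M" for e
  proof -
    have "e \<subseteq> {..<2*m-2}" using ME that by auto
    then have "e \<inter> ?f = {}" using assms(1) by auto
    moreover have "\<not> edges_cross e ?f"
      by (rule noncross_far[of e "2*m-2"]) (use ME that assms(1) in auto)
    ultimately show "edges_disjoint e ?f" "edges_disjoint ?f e"
      by (auto simp: edges_disjoint_def cross_sym)
  qed
  have "\<forall>e\<in>insert ?f M. \<forall>f\<in>insert ?f M. e \<noteq> f \<longrightarrow> edges_disjoint e f"
    using dj assms(2) by (auto simp: is_SPM_def)
  then show ?thesis using c fck Mck by (simp add: is_SPM_def)
qed

lemma reduce_blocking:
  assumes "0 < m" "is_blocking_set m B" "{2*m-2, 2*m-1} \<notin> B"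
  shows "is_blocking_set (m-1) {e\<in>B. e \<subseteq> {..<2*m-2}}"
proof -
  have Bck: "B \<subseteq> ck_edges m" using assms(2) by (simp add: is_blocking_set_def)
  have "{e\<in>B. e \<subseteq> {..<2*m-2}} \<subseteq> ck_edges (m-1)"
  proof
    fix e assume "e \<in> {e\<in>B. e \<subseteq> {..<2*m-2}}"
    then have "e \<subseteq> {..<2*(m-1)}" "card e = 2" using Bck ck_edges_iff unfolding two_m1 by auto
    then show "e \<in> ck_edges (m-1)" unfolding ck_edges_iff by simp
  qed
  moreover have "{e\<in>B. e \<subseteq> {..<2*m-2}} \<inter> M \<noteq> {}" if "is_SPM (m-1) M" for M
  proof -
    have "is_SPM m (insert {2*m-2, 2*m-1} M)" by (rule SPM_extend[OF assms(1) that])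
    then obtain e where e: "e \<in> B" "e \<in> insert {2*m-2, 2*m-1} M"
      using assms(2) unfolding is_blocking_set_def by blast
    then have "e \<in> M" using assms(3) by auto
    moreover have "e \<subseteq> {..<2*m-2}" using SPM_edge[OF that \<open>e \<in> M\<close>] unfolding two_m1 by blast
    ultimately show ?thesis using e by blast
  qed
  ultimately show ?thesis unfolding is_blocking_set_def by blast
qed

lemma C2:
  assumes m: "2 \<le> m" and B: "is_blocker m B" and v: "Suc v < 2*m" and nb: "{v, Suc v} \<notin> B"
    and e: "e1 \<in> B" "e2 \<in> B" "e1 \<inter> {v, Suc v} \<noteq> {}" "e2 \<inter> {v, Suc v} \<noteq> {}"
  shows "e1 = e2"
proof (rule ccontr)
  assume ne: "e1 \<noteq> e2"
  let ?r = "2*m - 2 - v"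
  let ?B = "rotS m ?r B"
  have m0: "0 < m" using m by simp
  have B': "is_blocker m ?B" by (rule rot_blocker[OF m0 B])
  have Bck: "B \<subseteq> ck_edges m" using B by (simp add: is_blocker_def is_blocking_set_def)
  have Bsub: "\<forall>e\<in>B. e \<subseteq> {..<2*m}" using Bck ck_edges_iff by blast
  have rv: "rot m ?r v = 2*m-2" "rot m ?r (Suc v) = 2*m-1" unfolding rot_def using v by auto
  have rf: "rot m ?r ` {v, Suc v} = {2*m-2, 2*m-1}" using rv by simp
  have nb': "{2*m-2, 2*m-1} \<notin> ?B"
  proof
    assume "{2*m-2, 2*m-1} \<in> ?B"
    then obtain e where "e \<in> B" "rot m ?r ` e = rot m ?r ` {v, Suc v}" unfolding rotS_def rf by auto
    moreover have "{v, Suc v} \<subseteq> {..<2*m}" using v by auto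
    ultimately have "e = {v, Suc v}" using Bsub inj_on_image_eq_iff[OF rot_inj] by metis
    then show False using nb \<open>e \<in> B\<close> by simp
  qed
  let ?R = "{e\<in>?B. e \<subseteq> {..<2*m-2}}"
  have "is_blocking_set (m-1) ?R"
    by (rule reduce_blocking[OF m0 _ nb']) (use B' in \<open>simp add: is_blocker_def\<close>)
  then have lb: "m - 1 \<le> card ?R" using blocking_lower[of "m-1"] m by simp
  have out: "\<not> rot m ?r ` e \<subseteq> {..<2*m-2}" if H: "e \<inter> {v, Suc v} \<noteq> {}" for e
  proof -
    obtain x where "x \<in> e" "x = v \<or> x = Suc v" using H by auto
    then have "rot m ?r x \<in> rot m ?r ` e" "rot m ?r x \<ge> 2*m-2" using rv by auto
    then show ?thesis by auto
  qed
  have ne': "rot m ?r ` e1 \<noteq> rot m ?r ` e2"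
    using ne e Bsub inj_on_image_eq_iff[OF rot_inj] by metis
  have in': "rot m ?r ` e1 \<in> ?B" "rot m ?r ` e2 \<in> ?B" using e unfolding rotS_def by auto
  have "?R \<subseteq> ?B - {rot m ?r ` e1, rot m ?r ` e2}" using out e by auto
  moreover have "finite ?B" using B' blocker_finite is_blocker_def by blast
  ultimately have "card ?R \<le> card (?B - {rot m ?r ` e1, rot m ?r ` e2})" by (simp add: card_mono)
  also have "\<dots> = card ?B - 2" using in' ne' \<open>finite ?B\<close> by (simp add: card_Diff_subset)
  also have "card ?B = m" using B' by (simp add: is_blocker_def)
  finally show False using lb m by simp
qed

lemma end_form:
  assumes m: "2 \<le> m" and B: "is_blocker m B" and g: "{2*m-3, 2*m-2} \<in> B"
    and nb: "{2*m-2, 2*m-1} \<notin> B"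
  shows "is_blocker (m-1) (B - {{2*m-3, 2*m-2}}) \<and> (\<forall>e \<in> B - {{2*m-3, 2*m-2}}. e \<subseteq> {..<2*m-2})"
proof -
  let ?g = "{2*m-3, 2*m-2}"
  let ?R = "{e\<in>B. e \<subseteq> {..<2*m-2}}"
  have m0: "0 < m" using m by simp
  have bl: "is_blocking_set (m-1) ?R"
    by (rule reduce_blocking[OF m0 _ nb]) (use B in \<open>simp add: is_blocker_def\<close>)
  then have lb: "m - 1 \<le> card ?R" using blocking_lower[of "m-1"] m by simp
  have fin: "finite B" using B blocker_finite is_blocker_def by blast
  have sub: "?R \<subseteq> B - {?g}" using m by auto
  have cB: "card (B - {?g}) = m - 1" using B g fin by (simp add: is_blocker_def)
  have "card ?R \<le> card (B - {?g})" using sub fin by (simp add: card_mono)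
  have eq: "?R = B - {?g}"
    by (rule card_subset_eq) (use sub cB lb fin \<open>card ?R \<le> card (B - {?g})\<close> in auto)
  show ?thesis using bl eq cB by (auto simp: is_blocker_def)
qed

section \<open>Monotone relabelling\<close>

lemma mono_sb:
  assumes mono: "\<forall>x\<in>A. \<forall>y\<in>A. x < y \<longrightarrow> f x < (f y::nat)" and "a \<in> A" "b \<in> A" "c \<in> A"
  shows "strictly_between (f a) (f b) (f c) = strictly_between a b (c::nat)"
proof -
  have lt: "f x < f y \<longleftrightarrow> x < y" if "x \<in> A" "y \<in> A" for x y
    using mono that by (metis less_asym linorder_neqE_nat)
  show ?thesis unfolding strictly_between_def min_def max_def
    using lt[OF assms(2) assms(3)] lt[OF assms(3) assms(2)] lt[OF assms(2) assms(4)] lt[OF assms(4) assms(2)]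
      lt[OF assms(3) assms(4)] lt[OF assms(4) assms(3)]
    by (auto simp: not_le)
qed

lemma mono_inj: "\<forall>x\<in>A. \<forall>y\<in>A. x < y \<longrightarrow> f x < (f y::nat) \<Longrightarrow> inj_on f (A::nat set)"
  by (rule inj_onI) (metis less_irrefl linorder_neqE_nat)

lemma mono_cross:
  assumes mono: "\<forall>x\<in>A. \<forall>y\<in>A. x < y \<longrightarrow> f x < (f y::nat)"
    and "e \<subseteq> A" "card e = 2" "e' \<subseteq> A" "card e' = 2"
  shows "edges_cross (f ` e) (f ` e') = edges_cross e (e'::nat set)"
proof -
  obtain a b where ab: "a \<noteq> b" "e = {a,b}" using card2_ex[OF assms(3)] by blast
  obtain c d where cd: "c \<noteq> d" "e' = {c,d}" using card2_ex[OF assms(5)] by blast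
  have A: "a \<in> A" "b \<in> A" "c \<in> A" "d \<in> A" using ab cd assms by auto
  have inj: "inj_on f A" by (rule mono_inj[OF mono])
  have fi: "f x = f y \<longleftrightarrow> x = y" if "x \<in> A" "y \<in> A" for x y using inj that by (auto dest: inj_onD)
  have "edges_cross (f ` e) (f ` e') = edges_cross {f a, f b} {f c, f d}" using ab cd by simp
  also have "\<dots> = (distinct [f a, f b, f c, f d] \<and>
     (strictly_between (f a) (f b) (f c) \<noteq> strictly_between (f a) (f b) (f d)))"
    by (rule cross_iff) (use fi A ab(1) cd(1) in blast)+
  also have "\<dots> = (distinct [a,b,c,d] \<and> (strictly_between a b c \<noteq> strictly_between a b d))"
    using mono_sb[OF mono A(1,2,3)] mono_sb[OF mono A(1,2,4)] fi A by auto
  also have "\<dots> = edges_cross e e'" using cross_iff[OF ab(1) cd(1)] ab cd by simp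
  finally show ?thesis .
qed

section \<open>Coverage and innermost edge\<close>

lemma SPM_cover:
  assumes "is_SPM m M" shows "\<Union>M = {..<2*m}"
proof -
  have fin: "finite M" using SPM_finite[OF assms] .
  have sub: "\<Union>M \<subseteq> {..<2*m}" using SPM_edge[OF assms] by auto
  have "card (\<Union>M) = (\<Sum>e\<in>M. card e)"
  proof (rule card_Union_disjoint)
    show "pairwise disjnt M" unfolding pairwise_def disjnt_def
      using assms by (auto simp: is_SPM_def edges_disjoint_def)
    show "\<And>e. e \<in> M \<Longrightarrow> finite e" using SPM_edge[OF assms] by (metis card.infinite zero_neq_numeral)
  qed
  also have "\<dots> = 2 * card M" using SPM_edge[OF assms] by simp
  also have "\<dots> = 2*m" using assms by (simp add: is_SPM_def)
  finally have "card (\<Union>M) = card {..<2*m}" by simp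
  then show ?thesis using sub by (simp add: card_subset_eq)
qed

lemma SPM_innermost:
  assumes M: "is_SPM m M" and m: "0 < m"
  shows "\<exists>t. Suc t < 2*m \<and> {t, Suc t} \<in> M"
proof -
  define len where "len e = Max e - Min e" for e :: "nat set"
  have ne: "M \<noteq> {}" using M m by (auto simp: is_SPM_def)
  have fin: "finite M" using SPM_finite[OF M] .
  have "Min (len ` M) \<in> len ` M" using fin ne by simp
  then obtain e where e0: "e \<in> M" "len e = Min (len ` M)" by auto
  then have e: "e \<in> M" "\<forall>e'\<in>M. len e \<le> len e'" using fin by auto
  obtain a b where ab: "a < b" "e = {a,b}"
    using card2_ex SPM_edge[OF M e(1)] by (metis doubleton_eq_iff linorder_neqE_nat)
  have lene: "len e = b - a" unfolding len_def ab(2) using ab(1) by simp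
  have b2: "b < 2*m" using SPM_edge[OF M e(1)] ab by auto
  show ?thesis
  proof (cases "b = Suc a")
    case True then show ?thesis using e ab b2 by blast
  next
    case False
    then have a1: "Suc a < b" using ab by simp
    then have "Suc a \<in> \<Union>M" using SPM_cover[OF M] b2 by simp
    then obtain e' where e': "e' \<in> M" "Suc a \<in> e'" by blast
    have "e' \<noteq> e" using e' ab a1 by auto
    then have dj: "edges_disjoint e e'" using M e(1) e'(1) by (auto simp: is_SPM_def)
    obtain c where c: "c \<noteq> Suc a" "e' = {Suc a, c}"
      using card2_ex SPM_edge[OF M e'(1)] e'(2) by (metis insert_commute insert_iff singletonD)
    have "c \<noteq> a" "c \<noteq> b" using dj c ab by (auto simp: edges_disjoint_def)
    have ncr: "\<not> edges_cross {a,b} {Suc a, c}" using dj c ab by (simp add: edges_disjoint_def)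
    have "a < c \<and> c < b"
    proof (rule ccontr)
      assume "\<not> (a < c \<and> c < b)"
      then have "strictly_between a b (Suc a) \<noteq> strictly_between a b c"
        using a1 \<open>c \<noteq> a\<close> \<open>c \<noteq> b\<close> by (auto simp: strictly_between_def)
      moreover have "distinct [a, b, Suc a, c]" using a1 c \<open>c \<noteq> a\<close> \<open>c \<noteq> b\<close> ab by auto
      ultimately show False using ncr cross_iff[of a b "Suc a" c] ab(1) c(1) by auto
    qed
    then have "len e' < b - a" unfolding len_def c(2) using c(1) by (auto simp: max_def min_def)
    then have "len e' < len e" using lene by simp
    then show ?thesis using e e' by (meson leD)
  qed
qed

section \<open>Deleting two consecutive vertices\<close>

definition dsh :: "nat \<Rightarrow> nat \<Rightarrow> nat" where
  "dsh t v = (if v < t then v else v - 2)"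

definition lift :: "nat \<Rightarrow> nat \<Rightarrow> nat" where
  "lift t v = (if v < t then v else v + 2)"

lemma lift_dsh: "v \<noteq> t \<Longrightarrow> v \<noteq> Suc t \<Longrightarrow> lift t (dsh t v) = v"
  unfolding lift_def dsh_def by auto

lemma SPM_shrink:
  assumes M: "is_SPM m M" and f: "{t, Suc t} \<in> M" and t: "Suc t < 2*m"
  shows "is_SPM (m-1) ((\<lambda>e. dsh t ` e) ` (M - {{t, Suc t}}))"
    and "\<forall>e \<in> M - {{t, Suc t}}. lift t ` (dsh t ` e) = e"
proof -
  let ?f = "{t, Suc t}"
  let ?A = "{..<2*m} - ?f"
  have away: "e \<subseteq> ?A" if "e \<in> M - {?f}" for e
  proof -
    have "edges_disjoint e ?f" using M f that by (auto simp: is_SPM_def)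
    then show ?thesis using SPM_edge[OF M] that by (auto simp: edges_disjoint_def)
  qed
  have mono: "\<forall>x\<in>?A. \<forall>y\<in>?A. x < y \<longrightarrow> dsh t x < dsh t y" unfolding dsh_def by auto
  have inj: "inj_on (dsh t) ?A" by (rule mono_inj[OF mono])
  have rng: "dsh t x < 2*(m-1)" if "x \<in> ?A" for x using that t unfolding dsh_def two_m1 by auto
  show "\<forall>e \<in> M - {?f}. lift t ` (dsh t ` e) = e"
  proof
    fix e assume "e \<in> M - {?f}"
    then have "e \<subseteq> ?A" by (rule away)
    then have "\<forall>x\<in>e. lift t (dsh t x) = x" using lift_dsh by blast
    then have "lift t ` (dsh t ` e) = id ` e" unfolding image_image by (intro image_cong) auto
    then show "lift t ` (dsh t ` e) = e" by simp
  qed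
  have fin: "finite M" by (rule SPM_finite[OF M])
  have injE: "inj_on (\<lambda>e. dsh t ` e) (M - {?f})"
  proof (rule inj_onI)
    fix e1 e2 assume "e1 \<in> M - {?f}" "e2 \<in> M - {?f}" "dsh t ` e1 = dsh t ` e2"
    then show "e1 = e2" using inj_on_image_eq_iff[OF inj away away] by blast
  qed
  have c: "card ((\<lambda>e. dsh t ` e) ` (M - {?f})) = m - 1"
    using card_image[OF injE] M f fin by (simp add: is_SPM_def)
  have ck: "(\<lambda>e. dsh t ` e) ` (M - {?f}) \<subseteq> ck_edges (m-1)"
  proof
    fix e' assume "e' \<in> (\<lambda>e. dsh t ` e) ` (M - {?f})"
    then obtain e where e: "e \<in> M - {?f}" "e' = dsh t ` e" by blast
    have "inj_on (dsh t) e" using inj_on_subset[OF inj away[OF e(1)]] .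
    then have "card e' = card e" using e(2) card_image by blast
    then have "card e' = 2" using SPM_edge[OF M] e by auto
    moreover have "e' \<subseteq> {..<2*(m-1)}" using e away rng by blast
    ultimately show "e' \<in> ck_edges (m-1)" unfolding ck_edges_iff by simp
  qed
  have dj: "edges_disjoint e1' e2'" if H: "e1' \<in> (\<lambda>e. dsh t ` e) ` (M - {?f})"
    "e2' \<in> (\<lambda>e. dsh t ` e) ` (M - {?f})" "e1' \<noteq> e2'" for e1' e2'
  proof -
    obtain e1 e2 where e: "e1 \<in> M - {?f}" "e1' = dsh t ` e1" "e2 \<in> M - {?f}" "e2' = dsh t ` e2"
      using H(1,2) by blast
    then have "e1 \<noteq> e2" using H(3) by auto
    then have d: "edges_disjoint e1 e2" using M e by (auto simp: is_SPM_def)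
    have s: "e1 \<subseteq> ?A" "e2 \<subseteq> ?A" using away e by auto
    have "e1' \<inter> e2' = {}"
      using d unfolding e(2,4) edges_disjoint_def using inj_on_image_Int[OF inj s] by simp
    moreover have "\<not> edges_cross e1' e2'"
    proof -
      have c: "card e1 = 2" "card e2 = 2" using SPM_edge[OF M] e(1,3) by auto
      have "edges_cross (dsh t ` e1) (dsh t ` e2) = edges_cross e1 e2"
        by (rule mono_cross[OF mono s(1) c(1) s(2) c(2)])
      then show ?thesis using d e(2,4) unfolding edges_disjoint_def by simp
    qed
    ultimately show ?thesis by (simp add: edges_disjoint_def)
  qed
  show "is_SPM (m-1) ((\<lambda>e. dsh t ` e) ` (M - {?f}))"
    unfolding is_SPM_def
  proof (intro conjI)
    show "\<forall>e\<in>(\<lambda>e. dsh t ` e) ` (M - {?f}). \<forall>f\<in>(\<lambda>e. dsh t ` e) ` (M - {?f}). e \<noteq> f \<longrightarrow> edges_disjoint e f"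
      using dj by blast
  qed (use c ck in auto)
qed

definition cat :: "nat \<Rightarrow> nat \<Rightarrow> (nat \<Rightarrow> nat) \<Rightarrow> bool" where
  "cat m j d \<longleftrightarrow> 1 \<le> j \<and> j \<le> m \<and> (\<forall>k<j. d k = 0) \<and>
     (\<forall>k. j \<le> k \<longrightarrow> Suc k < m \<longrightarrow> d k < d (Suc k)) \<and> (j < m \<longrightarrow> 1 \<le> d j) \<and>
     (\<forall>k. j \<le> k \<longrightarrow> k < m \<longrightarrow> d k + 2 \<le> m) \<and> (\<forall>k\<ge>m. d k = 0)"

definition ed :: "(nat \<Rightarrow> nat) \<Rightarrow> nat \<Rightarrow> nat set" where
  "ed d k = {k - d k, Suc k + d k}"

definition N :: "nat \<Rightarrow> (nat \<Rightarrow> nat) \<Rightarrow> nat set set" where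
  "N m d = ed d ` {..<m}"

lemma cat_grow:
  assumes "cat m j d" "j \<le> k" "k \<le> k'" "k' < m"
  shows "d k + (k' - k) \<le> d k'"
  using assms(3,4)
proof (induction k')
  case 0 then show ?case by simp
next
  case (Suc k')
  show ?case
  proof (cases "k = Suc k'")
    case True then show ?thesis by simp
  next
    case False
    then have "k \<le> k'" using Suc by simp
    then have "d k + (k' - k) \<le> d k'" using Suc by simp
    moreover have "d k' < d (Suc k')" using assms(1,2) \<open>k \<le> k'\<close> Suc(3) unfolding cat_def by auto
    ultimately show ?thesis using \<open>k \<le> k'\<close> by simp
  qed
qed

lemma cat_bounds:
  assumes c: "cat m j d" and k: "j \<le> k" "k < m"
  shows "k + 1 \<le> d k + j" "d k + 1 \<le> k"
proof -
  have "j < m" using k by simp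
  then have "1 \<le> d j" using c by (simp add: cat_def)
  moreover have "d j + (k - j) \<le> d k" using cat_grow[OF c le_refl k] .
  ultimately show "k + 1 \<le> d k + j" using k by simp
  have "d k + (m - 1 - k) \<le> d (m - 1)" using cat_grow[OF c k(1), of "m-1"] k by simp
  moreover have "d (m-1) + 2 \<le> m" using c k unfolding cat_def by auto
  ultimately show "d k + 1 \<le> k" using k by simp
qed

lemma cat_j2: "2 \<le> m \<Longrightarrow> cat m j d \<Longrightarrow> 2 \<le> j"
proof (rule ccontr)
  assume m: "2 \<le> m" and c: "cat m j d" and "\<not> 2 \<le> j"
  then have j: "j = 1" using c by (simp add: cat_def)
  have "1 + 1 \<le> d 1 + j" "d 1 + 1 \<le> 1" using cat_bounds[OF c, of 1] j m by auto
  then show False using j by simp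
qed

lemma cat_step: "cat m j d \<Longrightarrow> Suc k < m \<Longrightarrow> j \<le> Suc k \<Longrightarrow> d k < d (Suc k)"
proof -
  assume c: "cat m j d" and k: "Suc k < m" "j \<le> Suc k"
  show ?thesis
  proof (cases "j \<le> k")
    case True then show ?thesis using c k unfolding cat_def by blast
  next
    case False
    then have "j = Suc k" using k by simp
    then have "d k = 0" "1 \<le> d (Suc k)" using c k unfolding cat_def by auto
    then show ?thesis by simp
  qed
qed

lemma cat_zero: "cat m j d \<Longrightarrow> k < j \<Longrightarrow> d k = 0"
  unfolding cat_def by auto

lemma cat_dmono: "cat m j d \<Longrightarrow> k \<le> k' \<Longrightarrow> k' < m \<Longrightarrow> d k \<le> d k'"
proof (induction k')
  case 0 then show ?case by simp
next
  case (Suc k')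
  show ?case
  proof (cases "k = Suc k'")
    case True then show ?thesis by simp
  next
    case False
    then have "d k \<le> d k'" using Suc by simp
    moreover have "d k' \<le> d (Suc k')"
    proof (cases "j \<le> Suc k'")
      case True then show ?thesis using cat_step[OF Suc(2) Suc(4)] by simp
    next
      case False then show ?thesis using cat_zero[OF Suc(2)] by simp
    qed
    ultimately show ?thesis by simp
  qed
qed

lemma cat_lo: "cat m j d \<Longrightarrow> k < m \<Longrightarrow> k - d k < j \<and> d k \<le> k"
proof -
  assume c: "cat m j d" and k: "k < m"
  show ?thesis
  proof (cases "k < j")
    case True then show ?thesis using cat_zero[OF c] by simp
  next
    case False
    then show ?thesis using cat_bounds[OF c _ k] by simp
  qed
qed

lemma cat_hi: "cat m j d \<Longrightarrow> k < m \<Longrightarrow> Suc k + d k < 2*m"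
proof -
  assume c: "cat m j d" and k: "k < m"
  show ?thesis
  proof (cases "k < j")
    case True then show ?thesis using cat_zero[OF c] k by simp
  next
    case False
    then have "d k + 2 \<le> m" using c k unfolding cat_def by auto
    then show ?thesis using k by simp
  qed
qed

lemma ed_sum: "cat m j d \<Longrightarrow> k < m \<Longrightarrow> \<Sum>(ed d k) = 2*k+1"
proof -
  assume c: "cat m j d" and k: "k < m"
  have "d k \<le> k" using cat_lo[OF c k] by simp
  then show ?thesis unfolding ed_def by simp
qed

lemma ed_ck: "cat m j d \<Longrightarrow> k < m \<Longrightarrow> ed d k \<in> ck_edges m"
proof -
  assume c: "cat m j d" and k: "k < m"
  have "d k \<le> k" using cat_lo[OF c k] by simp
  moreover have "Suc k + d k < 2*m" by (rule cat_hi[OF c k])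
  ultimately show ?thesis unfolding ed_def ck_edges_iff by auto
qed

lemma N_ck: "cat m j d \<Longrightarrow> N m d \<subseteq> ck_edges m"
  unfolding N_def using ed_ck by blast

lemma ed_inj: "cat m j d \<Longrightarrow> inj_on (ed d) {..<m}"
proof (rule inj_onI)
  fix x y assume c: "cat m j d" and h: "x \<in> {..<m}" "y \<in> {..<m}" "ed d x = ed d y"
  then have "2*x+1 = 2*y+1" using ed_sum[OF c] by (metis lessThan_iff)
  then show "x = y" by simp
qed

lemma N_card: "cat m j d \<Longrightarrow> card (N m d) = m"
  unfolding N_def using card_image[OF ed_inj] by simp

lemma N_blocks: "cat m j d \<Longrightarrow> is_SPM m M \<Longrightarrow> N m d \<inter> M \<noteq> {}"
proof (induction m arbitrary: j d M)
  case 0 then show ?case unfolding cat_def by auto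
next
  case (Suc m')
  let ?m = "Suc m'"
  note c = Suc.prems(1) and M = Suc.prems(2)
  obtain t where t: "Suc t < 2*?m" "{t, Suc t} \<in> M" using SPM_innermost[OF M] by auto
  show ?case
  proof (cases "t < j")
    case True
    then have "d t = 0" using cat_zero[OF c] by simp
    then have "ed d t = {t, Suc t}" unfolding ed_def by simp
    moreover have "t < ?m" using True c by (simp add: cat_def)
    ultimately have "{t, Suc t} \<in> N ?m d" unfolding N_def by (metis imageI lessThan_iff)
    then show ?thesis using t by blast
  next
    case False
    then have tj: "j \<le> t" by simp
    have m2: "2 \<le> ?m"
    proof (rule ccontr)
      assume "\<not> 2 \<le> ?m"
      then have "?m = 1" by simp
      then have "j = 1" "t = 0" using c t(1) by (auto simp: cat_def)
      then show False using tj by simp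
    qed
    then have m'1: "1 \<le> m'" by simp
    have j2: "2 \<le> j" using cat_j2[OF m2 c] .
    define hi where "hi k = Suc k + d k" for k
    have hi_mono: "hi k \<le> hi k'" if "k \<le> k'" "k' < ?m" for k k'
      using cat_dmono[OF c that] that unfolding hi_def by simp
    define P where "P k \<longleftrightarrow> k < ?m \<and> t \<le> hi k" for k
    define k0 where "k0 = (if \<exists>k. P k then (LEAST k. P k) else m')"
    have L: "P k0" if ex: "\<exists>k. P k"
    proof -
      have "k0 = (LEAST k. P k)" using ex unfolding k0_def by simp
      then show ?thesis using LeastI_ex[OF ex] by simp
    qed
    have p1: "k0 \<le> m'"
    proof (cases "\<exists>k. P k")
      case True then show ?thesis using L unfolding P_def by simp
    qed (simp add: k0_def)
    have p2: "hi k < t" if "k < k0" for k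
    proof (cases "\<exists>k. P k")
      case True
      then have "k0 = (LEAST k. P k)" unfolding k0_def by simp
      then have "\<not> P k" using that not_less_Least by simp
      then show ?thesis using that p1 unfolding P_def by simp
    next
      case False
      have "k < ?m" using that p1 by simp
      then show ?thesis using False unfolding P_def by (simp add: not_le)
    qed
    have p4: "j \<le> Suc k0"
    proof (rule ccontr)
      assume "\<not> j \<le> Suc k0"
      then have sj: "Suc k0 < j" by simp
      then have "k0 < m'" using c by (simp add: cat_def)
      then have ex: "\<exists>k. P k" unfolding k0_def by (cases "\<exists>k. P k") auto
      then have h0: "t \<le> hi k0" using L unfolding P_def by simp
      have "hi k0 = Suc k0" using cat_zero[OF c, of k0] sj unfolding hi_def by simp
      then show False using h0 tj sj by simp
    qed
    have p3: "t + 2 \<le> hi (Suc k)" if "k0 \<le> k" "Suc k < ?m" for k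
    proof (cases "\<exists>k. P k")
      case True
      then have h0: "t \<le> hi k0" using L unfolding P_def by simp
      have "hi k0 \<le> hi k" using hi_mono that by simp
      moreover have "d k < d (Suc k)" using cat_step[OF c that(2)] p4 that by simp
      ultimately show ?thesis using h0 unfolding hi_def by simp
    next
      case False
      then have "k0 = m'" unfolding k0_def by auto
      then show ?thesis using that by simp
    qed
    define d' where "d' k = (if k < k0 then d k else if k < m' then d (Suc k) - 1 else 0)" for k
    define j' where "j' = (if Suc k0 = j \<and> (j = ?m \<or> d j \<noteq> 1) then j - 1 else j)"
    have dpos: "1 \<le> d (Suc k)" if "k0 \<le> k" "Suc k < ?m" for k
      using cat_bounds[OF c, of "Suc k"] that p4 by simp
    have jc: "j' = j \<or> (j' = j - 1 \<and> Suc k0 = j \<and> (j = ?m \<or> d j \<noteq> 1))"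
      unfolding j'_def by auto
    have jjm: "j < ?m" if "j' = j"
    proof (rule ccontr)
      assume "\<not> j < ?m"
      then have "j = ?m" using c by (simp add: cat_def)
      then have "Suc k0 = j" using p1 p4 by simp
      then have "j' = j - 1" unfolding j'_def using \<open>j = ?m\<close> by simp
      then show False using that j2 by simp
    qed
    have jk0: "j' = j" if "k < k0" "j' \<le> k" for k
      using jc that by auto
    have cA: "1 \<le> j'" "j' \<le> m'" using jc jjm j2 c p1 by (auto simp: cat_def)
    have cC: "\<forall>k<j'. d' k = 0"
    proof (intro allI impI)
      fix k assume k: "k < j'"
      show "d' k = 0"
      proof (cases "k < k0")
        case True then show ?thesis using k jc cat_zero[OF c, of k] unfolding d'_def by auto
      next
        case False
        then have "k0 = k" "j' = j" "Suc k0 = j" using k jc p4 by auto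
        then have "d j = 1" "j < ?m" using jjm unfolding j'_def by (auto split: if_splits)
        moreover have "k < m'" using \<open>j < ?m\<close> \<open>Suc k0 = j\<close> \<open>k0 = k\<close> by simp
        ultimately show ?thesis unfolding d'_def using False \<open>Suc k0 = j\<close> \<open>k0 = k\<close> by simp
      qed
    qed
    have cD: "\<forall>k. j' \<le> k \<longrightarrow> Suc k < m' \<longrightarrow> d' k < d' (Suc k)"
    proof (intro allI impI)
      fix k assume k: "j' \<le> k" "Suc k < m'"
      consider "Suc k < k0" | "Suc k = k0" | "k0 \<le> k" by linarith
      then show "d' k < d' (Suc k)"
      proof cases
        case 1
        then have "j' = j" using jk0[of k] k by simp
        then have "d k < d (Suc k)" using cat_step[OF c] k by simp
        then show ?thesis unfolding d'_def using 1 by simp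
      next
        case 2
        then have "j' = j" using jk0[of k] k by simp
        then have "d k < d (Suc k)" "d (Suc k) < d (Suc (Suc k))" using cat_step[OF c] k by auto
        then show ?thesis unfolding d'_def using 2 k by simp
      next
        case 3
        have "d (Suc k) < d (Suc (Suc k))" using cat_step[OF c] k p4 3 by simp
        moreover have "1 \<le> d (Suc k)" using dpos[OF 3] k by simp
        ultimately show ?thesis unfolding d'_def using 3 k by simp
      qed
    qed
    have cE: "j' < m' \<longrightarrow> 1 \<le> d' j'"
    proof
      assume jm: "j' < m'"
      show "1 \<le> d' j'"
      proof (cases "j' = j")
        case True
        show ?thesis
        proof (cases "j < k0")
          case True
          then show ?thesis using \<open>j' = j\<close> jjm c unfolding d'_def cat_def by auto
        next
          case False
          have "Suc j + 1 \<le> d (Suc j) + j" using cat_bounds(1)[OF c, of "Suc j"] jm \<open>j' = j\<close> by simp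
          then show ?thesis unfolding d'_def using False jm \<open>j' = j\<close> by simp
        qed
      next
        case False
        then have h: "j' = j - 1" "Suc k0 = j" "j = ?m \<or> d j \<noteq> 1" using jc by auto
        then have "j < ?m" using jm j2 by simp
        then have "d j \<noteq> 1" "1 \<le> d j" using h c by (auto simp: cat_def)
        have "j' = k0" using h by simp
        then have "d' j' = d (Suc k0) - 1" unfolding d'_def using jm by simp
        then show ?thesis using h \<open>d j \<noteq> 1\<close> \<open>1 \<le> d j\<close> by simp
      qed
    qed
    have cF: "\<forall>k. j' \<le> k \<longrightarrow> k < m' \<longrightarrow> d' k + 2 \<le> m'"
    proof (intro allI impI)
      fix k assume k: "j' \<le> k" "k < m'"
      show "d' k + 2 \<le> m'"
      proof (cases "k < k0")
        case True
        then have "j' = j" using jk0 k by simp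
        then have "d k + 1 \<le> k" using cat_bounds(2)[OF c] k by simp
        then show ?thesis unfolding d'_def using True k by simp
      next
        case False
        then have "d (Suc k) + 2 \<le> ?m" using c p4 k unfolding cat_def by auto
        moreover have "1 \<le> d (Suc k)" using dpos[of k] False k by simp
        ultimately show ?thesis unfolding d'_def using False k by simp
      qed
    qed
    have cG: "\<forall>k\<ge>m'. d' k = 0" unfolding d'_def using p1 by auto
    have c': "cat m' j' d'"
      unfolding cat_def using cA cC cD cE cF cG by blast
    let ?M' = "(\<lambda>e. dsh t ` e) ` (M - {{t, Suc t}})"
    have M': "is_SPM m' ?M'" using SPM_shrink(1)[OF M t(2) t(1)] by simp
    obtain e' where e': "e' \<in> N m' d'" "e' \<in> ?M'" using Suc.IH[OF c' M'] by blast
    obtain e where e: "e \<in> M - {{t, Suc t}}" "e' = dsh t ` e" using e'(2) by blast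
    have le: "lift t ` e' = e" using SPM_shrink(2)[OF M t(2) t(1)] e by simp
    obtain k where k: "k < m'" "e' = ed d' k" using e'(1) unfolding N_def by blast
    have "lift t ` ed d' k \<in> N ?m d"
    proof (cases "k < k0")
      case True
      then have "ed d' k = ed d k" unfolding ed_def d'_def by simp
      moreover have "hi k < t" using p2 True by simp
      then have "lift t ` ed d k = ed d k" unfolding ed_def lift_def hi_def by auto
      ultimately show ?thesis using k unfolding N_def by simp
    next
      case False
      then have kk: "k0 \<le> k" by simp
      have sk: "Suc k < ?m" using k by simp
      have dp: "1 \<le> d (Suc k)" using dpos[OF kk sk] .
      have "ed d' k = {Suc k - d (Suc k), k + d (Suc k)}"
        unfolding ed_def d'_def using False k dp by auto
      moreover have "Suc k - d (Suc k) < t" using cat_lo[OF c sk] tj by simp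
      moreover have "t \<le> k + d (Suc k)" using p3[OF kk sk] unfolding hi_def by simp
      ultimately have "lift t ` ed d' k = {Suc k - d (Suc k), Suc (Suc k) + d (Suc k)}"
        unfolding lift_def by auto
      then have "lift t ` ed d' k = ed d (Suc k)" unfolding ed_def by simp
      then show ?thesis using sk unfolding N_def by simp
    qed
    then have "e \<in> N ?m d" using le k by simp
    then show ?thesis using e by blast
  qed
qed

lemma lift_notin: "lift t v \<noteq> t" "lift t v \<noteq> Suc t"
  unfolding lift_def by auto

lemma lift_less: "v < t \<Longrightarrow> lift t v = v" "t \<le> v \<Longrightarrow> lift t v = v + 2"
  unfolding lift_def by auto

lemma cat_pos: "cat m j d \<Longrightarrow> j \<le> k \<Longrightarrow> k < m \<Longrightarrow> 1 \<le> d k"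
  using cat_bounds(1) by fastforce

lemma ed_lift: "lift t ` ed d k = {lift t (k - d k), lift t (Suc k + d k)}"
  unfolding ed_def by simp

lemma Ins:
  assumes m: "3 \<le> m" and c': "cat (m-1) j' d'" and x: "x < 2*m - 2"
    and B: "is_blocker m ((\<lambda>e. lift (Suc x) ` e) ` N (m-1) d' \<union> {{x, Suc x}})"
  shows "\<exists>j d. cat m j d \<and> (\<lambda>e. lift (Suc x) ` e) ` N (m-1) d' \<union> {{x, Suc x}} = N m d"
proof -
  define m' where "m' = m - 1"
  define t where "t = Suc x"
  define L where "L e = lift t ` e" for e
  have mm: "m = Suc m'" using m unfolding m'_def by simp
  have c: "cat m' j' d'" using c' unfolding m'_def .
  have m'2: "2 \<le> m'" using m unfolding m'_def by simp
  have j2: "2 \<le> j'" using cat_j2[OF m'2 c] .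
  have jm: "j' \<le> m'" using c by (simp add: cat_def)
  let ?B = "L ` N m' d' \<union> {{x, Suc x}}"
  have BB: "is_blocker m ?B" using B unfolding L_def t_def m'_def .
  have m2: "2 \<le> m" using m by simp
  have inB1: "L (ed d' k) \<in> ?B" if "k < m'" for k using that unfolding N_def by blast
  have hi_ge: "k \<le> Suc k + d' k" for k by simp
  show ?thesis
  proof (cases "x + 2 \<le> j'")
    case True
    \<comment> \<open>x strictly inside the path: contradiction with C2\<close>
    have d0: "d' x = 0" "d' (Suc x) = 0" using cat_zero[OF c] True by auto
    have e1: "L (ed d' x) = {x, x+3}" unfolding L_def ed_lift t_def using d0 by (simp add: lift_def eval_nat_numeral)
    have e2: "L (ed d' (Suc x)) = {x+3, x+4}" unfolding L_def ed_lift t_def using d0 by (simp add: lift_def eval_nat_numeral)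
    have "x < m'" "Suc x < m'" using True jm by auto
    then have "L (ed d' x) \<in> ?B" "L (ed d' (Suc x)) \<in> ?B" using inB1 by blast+
    then have in1: "{x, x+3} \<in> ?B" "{x+3, x+4} \<in> ?B" unfolding e1 e2 by blast+
    have nb: "{x+2, Suc (x+2)} \<notin> ?B"
    proof
      assume H: "{x+2, Suc (x+2)} \<in> ?B"
      have ne: "{x+2, Suc (x+2)} \<noteq> {x, Suc x}" by (simp add: doubleton_eq_iff)
      have "{x+2, Suc (x+2)} \<in> L ` N m' d'" using H ne by blast
      then obtain e where e: "{x+2, Suc (x+2)} = lift t ` e" unfolding L_def by blast
      have "Suc t \<in> {x+2, Suc (x+2)}" unfolding t_def by simp
      then have "Suc t \<in> lift t ` e" unfolding e .
      then obtain v where "Suc t = lift t v" by blast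
      then show False using lift_notin(2)[of t v] by simp
    qed
    have "Suc (x+2) < 2*m" using True jm mm by simp
    moreover have "{x, x+3} \<inter> {x+2, Suc (x+2)} \<noteq> {}" "{x+3, x+4} \<inter> {x+2, Suc (x+2)} \<noteq> {}"
      by (simp_all add: eval_nat_numeral)
    ultimately have "{x, x+3} = {x+3, x+4}"
      using C2[OF m2 BB _ nb in1] by blast
    then have False by (simp add: doubleton_eq_iff)
    then show ?thesis ..
  next
    case False
    note F1 = False
    show ?thesis
    proof (cases "x \<le> j'")
      case True
      define d where "d k = (if k \<le> x then 0 else if k < m then Suc (d' (k - 1)) else 0)" for k
      have xj: "j' \<le> Suc x" using F1 by simp
      have cd: "cat m (Suc x) d"
        unfolding cat_def
      proof (intro conjI allI impI)
        show "1 \<le> Suc x" by simp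
        show "Suc x \<le> m" using True jm mm by simp
        show "d k = 0" if "k < Suc x" for k using that unfolding d_def by simp
        show "d k < d (Suc k)" if "Suc x \<le> k" "Suc k < m" for k
        proof -
          have "d' (k - 1) < d' k" using cat_step[OF c, of "k-1"] that xj mm by simp
          then show ?thesis unfolding d_def using that by simp
        qed
        show "1 \<le> d (Suc x)" if "Suc x < m" using that unfolding d_def by simp
        show "d k + 2 \<le> m" if "Suc x \<le> k" "k < m" for k
        proof (cases "j' \<le> k - 1")
          case True
          then have "d' (k-1) + 2 \<le> m'" using c that mm unfolding cat_def by auto
          then show ?thesis unfolding d_def using that mm by simp
        next
          case False
          then have "d' (k-1) = 0" using cat_zero[OF c] by simp
          then show ?thesis unfolding d_def using that m by simp
        qed
        show "d k = 0" if "m \<le> k" for k using that unfolding d_def by simp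
      qed
      have low: "L (ed d' k) = ed d k" if "k < x" for k
      proof -
        have "d' k = 0" using cat_zero[OF c] that True by simp
        moreover have "d k = 0" unfolding d_def using that by simp
        ultimately show ?thesis unfolding L_def ed_lift ed_def t_def using that by (simp add: lift_def)
      qed
      have high: "L (ed d' k) = ed d (Suc k)" if "x \<le> k" "k < m'" for k
      proof -
        have lo: "k - d' k < t" using cat_lo[OF c that(2)] xj unfolding t_def by simp
        have hi: "t \<le> Suc k + d' k" using that unfolding t_def by simp
        have dk: "d (Suc k) = Suc (d' k)" unfolding d_def using that mm by simp
        have "d' k \<le> k" using cat_lo[OF c that(2)] by simp
        then show ?thesis unfolding L_def ed_lift ed_def using lift_less(1)[OF lo] lift_less(2)[OF hi] dk
          by simp
      qed
      have mid: "ed d x = {x, Suc x}" unfolding ed_def d_def by simp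
      have "?B = N m d"
      proof
        show "?B \<subseteq> N m d"
        proof
          fix e assume "e \<in> ?B"
          then consider "e = {x, Suc x}" | k where "k < m'" "e = L (ed d' k)" unfolding N_def by auto
          then show "e \<in> N m d"
          proof cases
            case 1
            have "x < m" using True jm mm by simp
            then have "ed d x \<in> N m d" unfolding N_def by simp
            then show ?thesis using mid 1 by simp
          next
            case 2
            show ?thesis
            proof (cases "k < x")
              case True then show ?thesis using 2 low mm unfolding N_def by simp
            next
              case False then show ?thesis using 2 high mm unfolding N_def by simp
            qed
          qed
        qed
        show "N m d \<subseteq> ?B"
        proof
          fix e assume "e \<in> N m d"
          then obtain k where k: "k < m" "e = ed d k" unfolding N_def by blast
          consider "k < x" | "k = x" | "x < k" by linarith
          then show "e \<in> ?B"
          proof cases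
            case 1
            then have "k < m'" using True jm by simp
            then have "L (ed d' k) \<in> ?B" by (rule inB1)
            then show ?thesis using low[OF 1] k by simp
          next
            case 2 then show ?thesis using mid k by simp
          next
            case 3
            then have "x \<le> k - 1" "k - 1 < m'" using k mm by auto
            then have "L (ed d' (k-1)) = ed d k" using high[of "k-1"] 3 by simp
            moreover have "L (ed d' (k-1)) \<in> ?B" using inB1 \<open>k - 1 < m'\<close> by blast
            ultimately show ?thesis using k by simp
          qed
        qed
      qed
      then show ?thesis using cd unfolding L_def t_def m'_def by blast
    next
      case False
      then have xj: "Suc j' \<le> x" by simp
      have x2: "x < 2*m'" using x mm by simp
      define hi where "hi k = Suc k + d' k" for k
      define lo where "lo k = k - d' k" for k
      have edlh: "ed d' k = {lo k, hi k}" for k unfolding ed_def lo_def hi_def by simp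
      have lo_lt: "lo k < j'" if "k < m'" for k using cat_lo[OF c that] unfolding lo_def by simp
      have sum_ed: "lo k + hi k = 2*k+1" if "k < m'" for k
        using cat_lo[OF c that] unfolding lo_def hi_def by simp
      have hi_mono: "hi k \<le> hi k'" if "k \<le> k'" "k' < m'" for k k'
        using cat_dmono[OF c that] that unfolding hi_def by simp
      show ?thesis
      proof (cases "\<exists>k. j' \<le> k \<and> k < m' \<and> hi k = x")
        case True
        then obtain k where k: "j' \<le> k" "k < m'" "hi k = x" by blast
        have lk: "lo k < x" using lo_lt[OF k(2)] xj by simp
        have e1: "L (ed d' k) = {lo k, x}" unfolding L_def edlh t_def using lk k(3) by (simp add: lift_def)
        have in1: "{lo k, x} \<in> ?B" using inB1[OF k(2)] e1 by simp
        have in2: "{x, Suc x} \<in> ?B" by simp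
        have x1: "1 \<le> x" using xj by simp
        have nb: "{x - 1, Suc (x - 1)} \<notin> ?B"
        proof
          assume H: "{x - 1, Suc (x - 1)} \<in> ?B"
          have ne: "{x - 1, Suc (x - 1)} \<noteq> {x, Suc x}" using x1 by (simp add: doubleton_eq_iff)
          have "{x - 1, Suc (x - 1)} \<in> L ` N m' d'" using H ne by blast
          then obtain k' where k': "k' < m'" "{x - 1, Suc (x - 1)} = {lift t (lo k'), lift t (hi k')}"
            unfolding N_def L_def edlh by auto
          have lh: "lo k' < hi k'" unfolding lo_def hi_def by simp
          have small: "lift t v \<le> x \<Longrightarrow> lift t v = v \<and> v < t" for v
            unfolding lift_def t_def by (auto split: if_splits)
          have S: "Suc (x-1) = x" using x1 by simp
          have "lift t (lo k') \<in> {x - 1, Suc (x - 1)}" "lift t (hi k') \<in> {x - 1, Suc (x - 1)}"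
            using k'(2) by blast+
          then have "lift t (lo k') \<le> x" "lift t (hi k') \<le> x" unfolding S by auto
          then have "lift t (lo k') = lo k'" "lift t (hi k') = hi k'" using small by blast+
          then have "lo k' \<in> {x-1, x}" "hi k' \<in> {x-1,x}"
            using \<open>lift t (lo k') \<in> {x - 1, Suc (x - 1)}\<close> \<open>lift t (hi k') \<in> {x - 1, Suc (x - 1)}\<close> S by auto
          then have "lo k' = x - 1" "hi k' = x" using lh x1 by auto
          then have "d' k' = 0" "k' = x - 1" using sum_ed[OF k'(1)] unfolding lo_def hi_def by auto
          moreover have "1 \<le> d' k'" using cat_pos[OF c _ k'(1)] \<open>k' = x - 1\<close> xj by simp
          ultimately show False by simp
        qed
        have "{lo k, x} = {x, Suc x}"
          by (rule C2[OF m2 BB _ nb in1 in2]) (use x1 x mm in auto)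
        then show ?thesis using lk by (simp add: doubleton_eq_iff)
      next
        case False
        note nt = this
        define Q where "Q k \<longleftrightarrow> k < m' \<and> x < hi k" for k
        define k0 where "k0 = (if \<exists>k. Q k then (LEAST k. Q k) else m')"
        have LQ: "Q k0" if ex: "\<exists>k. Q k"
        proof -
          have "k0 = (LEAST k. Q k)" using ex unfolding k0_def by simp
          then show ?thesis using LeastI_ex[OF ex] by simp
        qed
        have k0m: "k0 \<le> m'"
        proof (cases "\<exists>k. Q k")
          case True then show ?thesis using LQ unfolding Q_def by simp
        qed (simp add: k0_def)
        have below: "hi k \<le> x" if "k < k0" for k
        proof (cases "\<exists>k. Q k")
          case True
          then have "k0 = (LEAST k. Q k)" unfolding k0_def by simp
          then have "\<not> Q k" using that not_less_Least by simp
          then show ?thesis using that k0m unfolding Q_def by simp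
        next
          case False
          have "k < m'" using that k0m by simp
          then show ?thesis using False unfolding Q_def by (meson not_less)
        qed
        have above: "x < hi k" if "k0 \<le> k" "k < m'" for k
        proof (cases "\<exists>k. Q k")
          case True
          then have "x < hi k0" using LQ unfolding Q_def by simp
          then show ?thesis using hi_mono[OF that] by simp
        next
          case False
          then have "k0 = m'" unfolding k0_def by auto
          then show ?thesis using that by simp
        qed
        have k0lt: "k0 < m" using k0m mm by simp
        have "?B \<inter> P m k0 \<noteq> {}" using BB P_SPM[of m k0] m by (simp add: is_blocker_def is_blocking_set_def)
        then obtain e where e: "e \<in> ?B" "(\<Sum>e) mod (2*m) = 2*k0+1" using P_sum[OF k0lt] by blast
        have "e \<noteq> {x, Suc x}"
        proof
          assume ex: "e = {x, Suc x}"
          then have "\<Sum>e = 2*x+1" by simp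
          then have s: "(2*x+1) mod (2*m) = 2*k0+1" using e(2) by simp
          show False
          proof (cases "2*x+1 < 2*m")
            case True
            then have "x = k0" using s by simp
            then have kk: "k0 - 1 < k0" "k0 - 1 < m'" "j' \<le> k0 - 1" using xj k0m by auto
            have "hi (k0-1) \<le> x" using below kk by simp
            moreover have "hi (k0-1) \<noteq> x" using nt kk by blast
            moreover have "k0 \<le> hi (k0 - 1)" using xj \<open>x = k0\<close> unfolding hi_def by simp
            ultimately show False using \<open>x = k0\<close> by simp
          next
            case False
            have "(2*x+1) mod (2*m) = 2*x+1 - 2*m" using False x mm by (simp add: mod_if)
            then have xk: "x = k0 + m" using s False by simp
            then have "k0 < m' - 1" using x mm by simp
            then have "\<exists>k. Q k" unfolding k0_def by (cases "\<exists>k. Q k") auto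
            then have "x < hi k0" using LQ unfolding Q_def by simp
            show False
            proof (cases "k0 < j'")
              case True
              then have "hi k0 = Suc k0" using cat_zero[OF c] unfolding hi_def by simp
              then show False using \<open>x < hi k0\<close> xk mm by simp
            next
              case False
              then have "d' k0 + 2 \<le> m'" using c \<open>k0 < m' - 1\<close> unfolding cat_def by auto
              then show False using \<open>x < hi k0\<close> xk mm unfolding hi_def by simp
            qed
          qed
        qed
        then obtain k where k: "k < m'" "e = L (ed d' k)" using e(1) unfolding N_def by auto
        show ?thesis
        proof (cases "k < k0")
          case True
          have "hi k < t" using below[OF True] unfolding t_def by simp
          moreover have "lo k < hi k" unfolding lo_def hi_def by simp
          ultimately have "e = {lo k, hi k}" unfolding k(2) L_def edlh by (simp add: lift_def)
          then have "\<Sum>e = 2*k+1" using sum_ed[OF k(1)] \<open>lo k < hi k\<close> by simp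
          moreover have "2*k+1 < 2*m" using k mm by simp
          ultimately show ?thesis using e(2) True by simp
        next
          case False
          have "x < hi k" using above[of k] False k(1) by simp
          then have "t \<le> hi k" unfolding t_def by simp
          moreover have "lo k < t" using lo_lt[OF k(1)] xj unfolding t_def by simp
          ultimately have "e = {lo k, hi k + 2}" unfolding k(2) L_def edlh by (simp add: lift_def insert_commute)
          then have "\<Sum>e = 2*k+3" using sum_ed[OF k(1)] \<open>lo k < t\<close> \<open>t \<le> hi k\<close> by simp
          moreover have "2*k+3 < 2*m" using k mm by simp
          ultimately show ?thesis using e(2) False by simp
        qed
      qed
    qed
  qed
qed

definition bd :: "nat \<Rightarrow> nat \<Rightarrow> nat set" where
  "bd m v = {v mod (2*m), Suc v mod (2*m)}"

lemma bd_mod: "bd m (v mod (2*m)) = bd m v"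
  unfolding bd_def by (simp add: mod_Suc_eq)

lemma bd_add: "bd m (v + 2*m) = bd m v"
proof -
  have "Suc (v + 2*m) = Suc v + 2*m" by simp
  then show ?thesis unfolding bd_def by (simp only: mod_add_self2)
qed

lemma rot_bd: "rot m r ` bd m w = bd m (w + r)"
  unfolding bd_def rot_def by (simp add: mod_add_left_eq mod_Suc_eq)

lemma bd_lt: "Suc v < 2*m \<Longrightarrow> bd m v = {v, Suc v}"
  unfolding bd_def by simp

lemma bd_last: "0 < m \<Longrightarrow> bd m (2*m - 1) = {2*m-1, 0}"
  unfolding bd_def by simp

lemma bd_sub: "0 < m \<Longrightarrow> bd m v \<subseteq> {..<2*m}"
  unfolding bd_def by simp

lemma bd_inj:
  assumes "2 \<le> m" shows "inj_on (bd m) {..<2*m}"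
proof (rule inj_onI)
  fix u u' assume h: "u \<in> {..<2*m}" "u' \<in> {..<2*m}" "bd m u = bd m u'"
  then have e: "{u, Suc u mod (2*m)} = {u', Suc u' mod (2*m)}" unfolding bd_def by simp
  show "u = u'"
  proof (rule ccontr)
    assume ne: "u \<noteq> u'"
    then have "u = Suc u' mod (2*m)" "u' = Suc u mod (2*m)" using e by (auto simp: doubleton_eq_iff)
    then show False using h assms by (auto simp: mod_if split: if_splits)
  qed
qed

lemma EB_SPM:
  assumes "0 < m" shows "is_SPM m ((\<lambda>i. {2*i, Suc (2*i)}) ` {..<m})"
proof -
  let ?M = "(\<lambda>i. {2*i, Suc (2*i)}) ` {..<m}"
  have inj: "inj_on (\<lambda>i. {2*i, Suc (2*i)}) {..<m}"
    by (rule inj_onI) (auto simp: doubleton_eq_iff)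
  have c: "card ?M = m" using card_image[OF inj] by simp
  have ck: "?M \<subseteq> ck_edges m"
  proof
    fix e assume "e \<in> ?M"
    then obtain i where i: "i < m" "e = {2*i, Suc (2*i)}" by auto
    then have "e \<subseteq> {..<2*m}" "card e = 2" by auto
    then show "e \<in> ck_edges m" unfolding ck_edges_iff by simp
  qed
  have dj: "edges_disjoint {2*i, Suc (2*i)} {2*i', Suc (2*i')}" if "i \<noteq> i'" for i i'
  proof -
    have "{2*i, Suc (2*i)} \<inter> {2*i', Suc (2*i')} = {}" using that by auto
    moreover have "\<not> edges_cross {2*i, Suc (2*i)} {2*i', Suc (2*i')}"
      by (rule noncross_if) (auto simp: strictly_between_def)
    ultimately show ?thesis by (simp add: edges_disjoint_def)
  qed
  have "\<forall>e\<in>?M. \<forall>f\<in>?M. e \<noteq> f \<longrightarrow> edges_disjoint e f"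
  proof (intro ballI impI)
    fix e f assume "e \<in> ?M" "f \<in> ?M" "e \<noteq> f"
    then obtain i i' where "e = {2*i, Suc (2*i)}" "f = {2*i', Suc (2*i')}" "i \<noteq> i'" by auto
    then show "edges_disjoint e f" using dj by simp
  qed
  then show ?thesis unfolding is_SPM_def using c ck by blast
qed

lemma blocker_has_end:
  assumes m: "2 \<le> m" and B: "is_blocker m B"
  shows "\<exists>v. bd m (v + 2*m - 1) \<in> B \<and> bd m v \<notin> B"
proof (rule ccontr)
  assume "\<not> ?thesis"
  then have H: "\<And>v. bd m (v + 2*m - 1) \<in> B \<Longrightarrow> bd m v \<in> B" by blast
  have m0: "0 < m" using m by simp
  have "B \<inter> (\<lambda>i. {2*i, Suc (2*i)}) ` {..<m} \<noteq> {}"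
    using B EB_SPM[OF m0] by (simp add: is_blocker_def is_blocking_set_def)
  then obtain i where i: "i < m" "{2*i, Suc (2*i)} \<in> B" by auto
  then have b0: "bd m (2*i) \<in> B" using bd_lt[of "2*i" m] by simp
  have all: "bd m (2*i + n) \<in> B" for n
  proof (induction n)
    case 0 then show ?case using b0 by simp
  next
    case (Suc n)
    have "bd m (2*i + Suc n + 2*m - 1) = bd m (2*i + n)"
      using bd_add[of m "2*i+n"] by (simp add: add.commute add.left_commute)
    then show ?case using H[of "2*i + Suc n"] Suc by simp
  qed
  have "bd m ` {..<2*m} \<subseteq> B"
  proof
    fix e assume "e \<in> bd m ` {..<2*m}"
    then obtain u where u: "u < 2*m" "e = bd m u" by auto
    have "bd m (2*i + (u + 2*m - 2*i)) = bd m (u + 2*m)" using i by simp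
    then show "e \<in> B" using all[of "u + 2*m - 2*i"] bd_add u by simp
  qed
  moreover have "finite B" using B blocker_finite is_blocker_def by blast
  ultimately have "card (bd m ` {..<2*m}) \<le> card B" by (simp add: card_mono)
  then have "2*m \<le> m" using card_image[OF bd_inj[OF m]] B by (simp add: is_blocker_def)
  then show False using m by simp
qed

lemma rotS_mod: "rotS m (k mod (2*m)) B = rotS m k B"
  unfolding rotS_def using rot_mod by simp

lemma rot_lift:
  assumes s: "s < 2*m - 2" and w: "w < 2*m - 2"
  shows "rot m (2*m - s) w = lift (2*m - 2 - s) (rot (m-1) (2*(m-1) - s) w)"
proof -
  have n: "2*(m-1) = 2*m - 2" by (rule two_m1)
  show ?thesis
  proof (cases "s \<le> w")
    case True
    have "rot (m-1) (2*(m-1) - s) w = (w - s + (2*m-2)) mod (2*m-2)"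
      unfolding rot_def n using s w True by (simp add: algebra_simps)
    also have "\<dots> = (w - s) mod (2*m-2)" by (rule mod_add_self2)
    also have "\<dots> = w - s" using w s by simp
    finally have 1: "rot (m-1) (2*(m-1) - s) w = w - s" .
    have "rot m (2*m - s) w = (w - s + 2*m) mod (2*m)" unfolding rot_def using s True by simp
    also have "\<dots> = w - s" using w by simp
    finally show ?thesis using 1 unfolding lift_def using w s True by simp
  next
    case False
    have 1: "rot (m-1) (2*(m-1) - s) w = w + (2*m-2) - s"
      unfolding rot_def n using s w False by simp
    have "rot m (2*m - s) w = w + 2*m - s" unfolding rot_def using s w False by simp
    moreover have ge: "2*m-2-s \<le> w + (2*m-2) - s" by arith
    moreover have "lift (2*m-2-s) (w + (2*m-2) - s) = w + (2*m-2) - s + 2" by (rule lift_less(2)[OF ge])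
    moreover have "w + (2*m-2) - s + 2 = w + 2*m - s" using s by arith
    ultimately show ?thesis using 1 by simp
  qed
qed

lemma rotS_lift:
  assumes s: "s < 2*m - 2" and E: "\<forall>e\<in>X. e \<subseteq> {..<2*m-2}"
  shows "rotS m (2*m - s) X = (\<lambda>e. lift (2*m - 2 - s) ` e) ` rotS (m-1) (2*(m-1) - s) X"
proof -
  have "rot m (2*m - s) ` e = lift (2*m - 2 - s) ` (rot (m-1) (2*(m-1) - s) ` e)" if "e \<in> X" for e
    unfolding image_image by (rule image_cong) (use rot_lift[OF s] E that in auto)
  then show ?thesis unfolding rotS_def image_image by simp
qed

lemma N_blocker: "0 < m \<Longrightarrow> cat m j d \<Longrightarrow> is_blocker m (N m d)"
  unfolding is_blocker_def is_blocking_set_def using N_ck N_card N_blocks by blast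

lemma N_sub: "cat m j d \<Longrightarrow> e \<in> N m d \<Longrightarrow> e \<subseteq> {..<2*m}"
  using N_ck ck_edges_iff by blast

lemma base2:
  assumes B: "is_blocker 2 B"
  shows "\<exists>s<2*2. \<exists>j d. cat 2 j d \<and> B = rotS 2 s (N 2 d)"
proof -
  have two: "{..<2::nat} = {0,1}" by auto
  have E00: "E 2 0 0 = {0,1}" by (simp add: E_def)
  have h1: "(0 + 2*2 - 1) mod (2*2) = (3::nat)" "(0+1+1) mod (2*2) = (2::nat)"
    "(1 + 2*2 - 0) mod (2*2) = (1::nat)" "(1+1+0) mod (2*2) = (2::nat)"
    "(1 + 2*2 - 1) mod (2*2) = (0::nat)" "(1+1+1) mod (2*2) = (3::nat)" by simp_all
  have E01: "E 2 0 1 = {3,2}" unfolding E_def by (simp only: h1)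
  have E10: "E 2 1 0 = {1,2}" unfolding E_def by (simp only: h1)
  have E11: "E 2 1 1 = {0,3}" unfolding E_def by (simp only: h1)
  have P0: "P 2 0 = {{0,1},{3,2}}" unfolding P_def two using E00 E01 by simp
  have P1: "P 2 1 = {{1,2},{0,3}}" unfolding P_def two using E10 E11 by simp
  have BM: "\<forall>M. is_SPM 2 M \<longrightarrow> B \<inter> M \<noteq> {}" using B unfolding is_blocker_def is_blocking_set_def by blast
  have "B \<inter> P 2 0 \<noteq> {}" using BM P_SPM[of 2 0] by simp
  then obtain a where a: "a \<in> B" "a \<in> P 2 0" by blast
  have "B \<inter> P 2 1 \<noteq> {}" using BM P_SPM[of 2 1] by simp
  then obtain b where b: "b \<in> B" "b \<in> P 2 1" by blast
  have "(\<Sum>a) mod (2*2) = 2*0+1" by (rule P_sum) (use a in simp_all)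
  moreover have "(\<Sum>b) mod (2*2) = 2*1+1" by (rule P_sum) (use b in simp_all)
  ultimately have ab: "a \<noteq> b" by auto
  have fB: "finite B" using B blocker_finite is_blocker_def by blast
  have cB: "card B = 2" using B is_blocker_def by blast
  have Bab: "B = {a, b}"
  proof (rule card_subset_eq[symmetric])
    show "finite B" "{a,b} \<subseteq> B" using fB a b by auto
    show "card {a,b} = card B" using ab cB by simp
  qed
  define d0 :: "nat \<Rightarrow> nat" where "d0 = (\<lambda>_. 0)"
  have c: "cat 2 2 d0" unfolding cat_def d0_def by simp
  have ed0: "ed d0 0 = {0,1}" unfolding ed_def d0_def by simp
  have "Suc 1 + 0 = (2::nat)" "(1::nat) - 0 = 1" by simp_all
  then have ed1: "ed d0 1 = {1,2}" unfolding ed_def d0_def by (simp only:)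
  have N: "N 2 d0 = {{0,1},{1,2}}" unfolding N_def two using ed0 ed1 by simp
  have rs: "rotS 2 s {{0,1},{1,2}} = {{rot 2 s 0, rot 2 s 1}, {rot 2 s 1, rot 2 s 2}}" for s
    unfolding rotS_def by simp
  have r0: "rot 2 0 0 = 0" "rot 2 0 1 = 1" "rot 2 0 2 = 2" by (simp_all add: rot_def)
  have r1: "rot 2 1 0 = 1" "rot 2 1 1 = 2" "rot 2 1 2 = 3" by (simp_all add: rot_def)
  have r2: "rot 2 2 0 = 2" "rot 2 2 1 = 3" "rot 2 2 2 = 0" by (simp_all add: rot_def)
  have r3: "rot 2 3 0 = 3" "rot 2 3 1 = 0" "rot 2 3 2 = 1" by (simp_all add: rot_def)
  have "a = {0,1} \<or> a = {3,2}" using a(2) P0 by simp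
  moreover have "b = {1,2} \<or> b = {0,3}" using b(2) P1 by simp
  ultimately consider "a = {0,1}" "b = {1,2}" | "a = {0,1}" "b = {0,3}" | "a = {3,2}" "b = {1,2}" | "a = {3,2}" "b = {0,3}"
    by blast
  then show ?thesis
  proof cases
    case 1
    have "B = rotS 2 0 (N 2 d0)" unfolding N rs r0 using 1 Bab by simp
    then show ?thesis using c by force
  next
    case 2
    have "B = rotS 2 3 (N 2 d0)" unfolding N rs r3 using 2 Bab by (simp add: insert_commute)
    moreover have "(3::nat) < 2*2" by simp
    ultimately show ?thesis using c by blast
  next
    case 3
    have "B = rotS 2 1 (N 2 d0)" unfolding N rs r1 using 3 Bab by (simp add: insert_commute)
    moreover have "(1::nat) < 2*2" by simp
    ultimately show ?thesis using c by blast
  next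
    case 4
    have "B = rotS 2 2 (N 2 d0)" unfolding N rs r2 using 4 Bab by (simp add: insert_commute)
    moreover have "(2::nat) < 2*2" by simp
    ultimately show ?thesis using c by blast
  qed
qed

lemma rotS_insert: "rotS m k (insert g X) = insert (rot m k ` g) (rotS m k X)"
  unfolding rotS_def by simp

lemma char_fwd:
  assumes "2 \<le> m" "is_blocker m B"
  shows "\<exists>s<2*m. \<exists>j d. cat m j d \<and> B = rotS m s (N m d)"
  using assms
proof (induction m arbitrary: B rule: nat_induct_at_least)
  case base
  then show ?case using base2 by simp
next
  case (Suc n)
  define M where "M = Suc n"
  have M3: "3 \<le> M" and M2: "2 \<le> M" and M0: "0 < M" using Suc.hyps unfolding M_def by auto
  have B: "is_blocker M B" using Suc.prems unfolding M_def .
  obtain v where v: "bd M (v + 2*M - 1) \<in> B" "bd M v \<notin> B" using blocker_has_end[OF M2 B] by blast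
  define q where "q = v mod (2*M)"
  have q: "q < 2*M" unfolding q_def using M0 by simp
  define r where "r = 4*M - 2 - q"
  have vr: "(v + r) mod (2*M) = 2*M - 2"
  proof -
    have "(v + r) mod (2*M) = (q + r) mod (2*M)" unfolding q_def by (simp add: mod_add_left_eq)
    also have "q + r = (2*M - 2) + 2*M" unfolding r_def using q M2 by simp
    also have "((2*M - 2) + 2*M) mod (2*M) = (2*M-2) mod (2*M)" by (rule mod_add_self2)
    also have "\<dots> = 2*M-2" using M2 by simp
    finally show ?thesis .
  qed
  have vr1: "(v + 2*M - 1 + r) mod (2*M) = 2*M - 3"
  proof -
    have e: "v + 2*M - 1 + r = v + (2*M - 1 + r)" using M2 by simp
    have "(v + 2*M - 1 + r) mod (2*M) = (q + (2*M - 1 + r)) mod (2*M)"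
      unfolding e q_def by (rule mod_add_left_eq[symmetric])
    also have "q + (2*M - 1 + r) = (2*M - 3) + 2*M*2" unfolding r_def using q M3 by simp
    also have "((2*M - 3) + 2*M*2) mod (2*M) = (2*M-3) mod (2*M)" by (rule mod_mult_self2)
    also have "\<dots> = 2*M-3" using M2 by simp
    finally show ?thesis .
  qed
  define B1 where "B1 = rotS M r B"
  have B1b: "is_blocker M B1" unfolding B1_def by (rule rot_blocker[OF M0 B])
  have Bsub: "\<forall>e\<in>B. e \<subseteq> {..<2*M}"
    using B ck_edges_iff unfolding is_blocker_def is_blocking_set_def by blast
  let ?g = "{2*M-3, 2*M-2}"
  have g: "?g \<in> B1"
  proof -
    have "rot M r ` bd M (v + 2*M - 1) \<in> B1" using v(1) unfolding B1_def rotS_def by blast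
    moreover have "rot M r ` bd M (v + 2*M - 1) = bd M (2*M - 3)"
      using rot_bd[of M r "v + 2*M - 1"] bd_mod[of M "v + 2*M - 1 + r"] vr1 by simp
    moreover have "Suc (2*M-3) = 2*M-2" "Suc (2*M - 3) < 2*M" using M3 by simp_all
    moreover have "bd M (2*M - 3) = ?g" using bd_lt[of "2*M-3" M] calculation(3,4) by simp
    ultimately show ?thesis by simp
  qed
  have nb: "{2*M-2, 2*M-1} \<notin> B1"
  proof
    assume "{2*M-2, 2*M-1} \<in> B1"
    moreover have "{2*M-2, 2*M-1} = rot M r ` bd M v"
    proof -
      have "rot M r ` bd M v = bd M (2*M-2)"
        using rot_bd[of M r v] bd_mod[of M "v + r"] vr by simp
      also have "\<dots> = {2*M-2, 2*M-1}"
      proof -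
        have "Suc (2*M-2) = 2*M-1" "Suc (2*M - 2) < 2*M" using M3 by simp_all
        then show ?thesis using bd_lt[of "2*M-2" M] by simp
      qed
      finally show ?thesis by simp
    qed
    ultimately obtain e where e: "e \<in> B" "rot M r ` e = rot M r ` bd M v" unfolding B1_def rotS_def by auto
    have "e = bd M v"
      using e Bsub bd_sub[OF M0] inj_on_image_eq_iff[OF rot_inj] by metis
    then show False using e v(2) by simp
  qed
  have ef: "is_blocker (M-1) (B1 - {?g}) \<and> (\<forall>e \<in> B1 - {?g}. e \<subseteq> {..<2*M-2})"
    by (rule end_form[OF M2 B1b g nb])
  have nM: "n = M - 1" unfolding M_def by simp
  obtain s j' d' where s: "s < 2*n" and c': "cat n j' d'" and B1': "B1 - {?g} = rotS n s (N n d')"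
    using Suc.IH[of "B1 - {?g}"] ef nM by blast
  define x where "x = 2*M - 3 - s"
  have sx: "s < 2*M - 2" "Suc x = 2*M - 2 - s" using s unfolding x_def M_def by auto
  define B2 where "B2 = rotS M (2*M - s) B1"
  have B2b: "is_blocker M B2" unfolding B2_def by (rule rot_blocker[OF M0 B1b])
  have B1ins: "B1 = insert ?g (B1 - {?g})" using g by auto
  have part1: "rotS M (2*M - s) (B1 - {?g}) = (\<lambda>e. lift (Suc x) ` e) ` N n d'"
  proof -
    have "rotS M (2*M - s) (B1 - {?g}) = (\<lambda>e. lift (2*M - 2 - s) ` e) ` rotS (M-1) (2*(M-1) - s) (B1 - {?g})"
      by (rule rotS_lift[OF sx(1)]) (use ef in blast)
    also have "rotS (M-1) (2*(M-1) - s) (B1 - {?g}) = N n d'"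
    proof -
      have Nsub: "\<forall>e\<in>N n d'. e \<subseteq> {..<2*n}" using N_sub[OF c'] by blast
      have "rotS n (2*n - s) (rotS n s (N n d')) = rotS n (2*n - s mod (2*n) + s) (N n d')"
        using s by (simp add: rotS_add)
      also have "\<dots> = N n d'" by (rule rotS_id[OF Nsub])
      finally show ?thesis using B1' nM by simp
    qed
    finally show ?thesis using sx(2) by simp
  qed
  have part2: "rot M (2*M - s) ` ?g = {x, Suc x}"
  proof -
    have "2*M-3 + (2*M - s) = (2*M - 3 - s) + 2*M" using sx M3 by simp
    then have "rot M (2*M - s) (2*M-3) = ((2*M - 3 - s) + 2*M) mod (2*M)" unfolding rot_def by simp
    also have "\<dots> = (2*M - 3 - s) mod (2*M)" by (rule mod_add_self2)
    also have "\<dots> = x" unfolding x_def using M3 by simp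
    finally have 1: "rot M (2*M - s) (2*M-3) = x" .
    have "2*M-2 + (2*M - s) = (2*M - 2 - s) + 2*M" using sx M3 by simp
    then have "rot M (2*M - s) (2*M-2) = ((2*M - 2 - s) + 2*M) mod (2*M)" unfolding rot_def by simp
    also have "\<dots> = (2*M - 2 - s) mod (2*M)" by (rule mod_add_self2)
    also have "\<dots> = Suc x" using sx M3 by simp
    finally have 2: "rot M (2*M - s) (2*M-2) = Suc x" .
    show ?thesis using 1 2 by simp
  qed
  have B2eq: "B2 = (\<lambda>e. lift (Suc x) ` e) ` N (M-1) d' \<union> {{x, Suc x}}"
    unfolding B2_def using B1ins rotS_insert part1 part2 nM by (metis Un_insert_right sup_bot.right_neutral)
  have xl: "x < 2*M - 2" unfolding x_def using sx M3 by simp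
  obtain j d where cd: "cat M j d" and B2N: "B2 = N M d"
    using Ins[OF M3 _ xl] c' B2b B2eq nM by metis
  define K where "K = 2*M - s + r"
  have "B2 = rotS M K B" unfolding B2_def B1_def K_def by (simp add: rotS_add)
  moreover have "rotS M (2*M - K mod (2*M) + K) B = B" by (rule rotS_id[OF Bsub])
  ultimately have "B = rotS M (2*M - K mod (2*M)) B2" by (simp add: rotS_add)
  then have "B = rotS M ((2*M - K mod (2*M)) mod (2*M)) (N M d)" using B2N rotS_mod by simp
  moreover have "(2*M - K mod (2*M)) mod (2*M) < 2*M" using M0 by simp
  ultimately show ?case using cd unfolding M_def by blast
qed

lemma char:
  assumes "2 \<le> m"
  shows "is_blocker m B \<longleftrightarrow> (\<exists>s<2*m. \<exists>j d. cat m j d \<and> B = rotS m s (N m d))"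
proof
  assume "is_blocker m B" then show "\<exists>s<2*m. \<exists>j d. cat m j d \<and> B = rotS m s (N m d)"
    using char_fwd[OF assms] by blast
next
  assume "\<exists>s<2*m. \<exists>j d. cat m j d \<and> B = rotS m s (N m d)"
  then obtain s j d where "cat m j d" "B = rotS m s (N m d)" by blast
  then show "is_blocker m B" using N_blocker rot_blocker assms by simp
qed

definition Dset :: "nat \<Rightarrow> (nat \<Rightarrow> nat) set" where
  "Dset m = {d. \<exists>j. cat m j d}"

definition ext :: "nat \<Rightarrow> (nat \<Rightarrow> nat) \<Rightarrow> nat \<Rightarrow> nat" where
  "ext m d = d(m := m - 1)"

definition shift :: "(nat \<Rightarrow> nat) \<Rightarrow> nat \<Rightarrow> nat" where
  "shift d = (\<lambda>k. if k = 0 then 0 else d (k - 1))"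

lemma cat_ext: assumes m: "2 \<le> m" and c: "cat m j d" shows "cat (Suc m) j (ext m d)"
  unfolding cat_def
proof (intro conjI allI impI)
  have j: "1 \<le> j" "j \<le> m" using c by (auto simp: cat_def)
  show "1 \<le> j" "j \<le> Suc m" using j by auto
  show "ext m d k = 0" if "k < j" for k using that j c unfolding ext_def cat_def by auto
  show "ext m d k < ext m d (Suc k)" if "j \<le> k" "Suc k < Suc m" for k
  proof (cases "Suc k < m")
    case True then show ?thesis using c that unfolding ext_def cat_def by auto
  next
    case False
    then have "Suc k = m" using that by simp
    then have "d k + 2 \<le> m" using c that unfolding cat_def by auto
    then show ?thesis unfolding ext_def using \<open>Suc k = m\<close> by auto
  qed
  show "1 \<le> ext m d j" if "j < Suc m"
  proof (cases "j = m")
    case True then show ?thesis unfolding ext_def using m by simp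
  next
    case False then show ?thesis using c that unfolding ext_def cat_def by auto
  qed
  show "ext m d k + 2 \<le> Suc m" if "j \<le> k" "k < Suc m" for k
  proof (cases "k = m")
    case True then show ?thesis unfolding ext_def using m by simp
  next
    case False then show ?thesis using c that unfolding ext_def cat_def by auto
  qed
  show "ext m d k = 0" if "Suc m \<le> k" for k using c that unfolding ext_def cat_def by auto
qed

lemma cat_shift: assumes c: "cat m j d" shows "cat (Suc m) (Suc j) (shift d)"
  unfolding cat_def
proof (intro conjI allI impI)
  have j: "1 \<le> j" "j \<le> m" using c by (auto simp: cat_def)
  show "1 \<le> Suc j" "Suc j \<le> Suc m" using j by auto
  show "shift d k = 0" if "k < Suc j" for k using that c unfolding shift_def cat_def by auto
  show "shift d k < shift d (Suc k)" if "Suc j \<le> k" "Suc k < Suc m" for k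
  proof -
    have "j \<le> k - 1" "Suc (k-1) < m" using that by auto
    then have "d (k-1) < d (Suc (k-1))" using c unfolding cat_def by blast
    then show ?thesis unfolding shift_def using that by simp
  qed
  show "1 \<le> shift d (Suc j)" if "Suc j < Suc m" using c that unfolding shift_def cat_def by auto
  show "shift d k + 2 \<le> Suc m" if "Suc j \<le> k" "k < Suc m" for k
  proof -
    have "d (k-1) + 2 \<le> m" using c that unfolding cat_def by auto
    then show ?thesis unfolding shift_def using that by simp
  qed
  show "shift d k = 0" if "Suc m \<le> k" for k using c that unfolding shift_def cat_def by auto
qed

lemma D_split:
  assumes m: "2 \<le> m"
  shows "Dset (Suc m) = ext m ` Dset m \<union> shift ` Dset m"
    and "ext m ` Dset m \<inter> shift ` Dset m = {}"
    and "inj_on (ext m) (Dset m)" "inj_on shift (Dset m)"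
proof -
  show "Dset (Suc m) = ext m ` Dset m \<union> shift ` Dset m"
  proof
    show "ext m ` Dset m \<union> shift ` Dset m \<subseteq> Dset (Suc m)"
      unfolding Dset_def using cat_ext[OF m] cat_shift by blast
    show "Dset (Suc m) \<subseteq> ext m ` Dset m \<union> shift ` Dset m"
    proof
      fix d assume "d \<in> Dset (Suc m)"
      then obtain j where c: "cat (Suc m) j d" unfolding Dset_def by blast
      have j2: "2 \<le> j" using cat_j2[OF _ c] m by simp
      show "d \<in> ext m ` Dset m \<union> shift ` Dset m"
      proof (cases "d m = m - 1")
        case True
        define d1 where "d1 = d(m := 0)"
        have jm: "j \<le> m"
        proof (rule ccontr)
          assume "\<not> j \<le> m"
          then have "d m = 0" using c unfolding cat_def by auto
          then show False using True m by simp
        qed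
        have c1: "cat m j d1" unfolding cat_def
        proof (intro conjI allI impI)
          show "1 \<le> j" "j \<le> m" using c jm by (auto simp: cat_def)
          show "d1 k = 0" if "k < j" for k using that c unfolding d1_def cat_def by auto
          show "d1 k < d1 (Suc k)" if "j \<le> k" "Suc k < m" for k
            using that c unfolding d1_def cat_def by auto
          show "1 \<le> d1 j" if "j < m" using that c unfolding d1_def cat_def by auto
          show "d1 k + 2 \<le> m" if "j \<le> k" "k < m" for k
          proof -
            have "d k + (m - k) \<le> d m" using cat_grow[OF c that(1), of m] that by simp
            then show ?thesis unfolding d1_def using that True m by simp
          qed
          show "d1 k = 0" if "m \<le> k" for k using that c unfolding d1_def cat_def by auto
        qed
        have "ext m d1 = d" unfolding ext_def d1_def using True by auto
        then show ?thesis using c1 unfolding Dset_def by blast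
      next
        case False
        define d1 where "d1 k = (if k < m then d (Suc k) else 0)" for k
        have dm: "d m + 2 \<le> m"
        proof (cases "j \<le> m")
          case True
          then have "d m + 2 \<le> Suc m" using c unfolding cat_def by auto
          then show ?thesis using False by simp
        next
          case False
          then have "d m = 0" using c unfolding cat_def by auto
          then show ?thesis using m by simp
        qed
        have c1: "cat m (j - 1) d1" unfolding cat_def
        proof (intro conjI allI impI)
          show "1 \<le> j - 1" "j - 1 \<le> m" using c j2 by (auto simp: cat_def)
          show "d1 k = 0" if "k < j - 1" for k using that c j2 unfolding d1_def cat_def by auto
          show "d1 k < d1 (Suc k)" if "j - 1 \<le> k" "Suc k < m" for k
            using that c unfolding d1_def cat_def by auto
          show "1 \<le> d1 (j - 1)" if "j - 1 < m" using that c j2 unfolding d1_def cat_def by auto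
          show "d1 k + 2 \<le> m" if "j - 1 \<le> k" "k < m" for k
          proof -
            have "d (Suc k) \<le> d m" using cat_dmono[OF c, of "Suc k" m] that by simp
            then show ?thesis unfolding d1_def using that dm by simp
          qed
          show "d1 k = 0" if "m \<le> k" for k using that unfolding d1_def by auto
        qed
        have "shift d1 = d"
        proof
          fix k show "shift d1 k = d k"
          proof (cases "k = 0")
            case True then show ?thesis unfolding shift_def using c j2 unfolding cat_def by auto
          next
            case False then show ?thesis unfolding shift_def d1_def using c unfolding cat_def by auto
          qed
        qed
        then show ?thesis using c1 unfolding Dset_def by blast
      qed
    qed
  qed
  show "ext m ` Dset m \<inter> shift ` Dset m = {}"
  proof (rule ccontr)
    assume "ext m ` Dset m \<inter> shift ` Dset m \<noteq> {}"
    then obtain d d' j j' where c: "cat m j d" "cat m j' d'" and eq: "ext m d = shift d'"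
      unfolding Dset_def by blast
    have "ext m d m = m - 1" unfolding ext_def by simp
    moreover have "shift d' m = d' (m - 1)" unfolding shift_def using m by simp
    moreover have "d' (m - 1) + 2 \<le> m \<or> d' (m-1) = 0"
      using c(2) m unfolding cat_def by (cases "j' \<le> m - 1") auto
    moreover have "ext m d m = shift d' m" using eq by simp
    ultimately show False using m by arith
  qed
  show "inj_on (ext m) (Dset m)"
  proof (rule inj_onI)
    fix d d' assume h: "d \<in> Dset m" "d' \<in> Dset m" "ext m d = ext m d'"
    show "d = d'"
    proof
      fix k show "d k = d' k"
      proof (cases "k = m")
        case True then show ?thesis using h unfolding Dset_def cat_def by auto
      next
        case False then show ?thesis using fun_cong[OF h(3), of k] unfolding ext_def by simp
      qed
    qed
  qed
  show "inj_on shift (Dset m)"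
  proof (rule inj_onI)
    fix d d' assume h: "d \<in> Dset m" "d' \<in> Dset m" "shift d = shift d'"
    show "d = d'"
    proof
      fix k show "d k = d' k" using fun_cong[OF h(3), of "Suc k"] unfolding shift_def by simp
    qed
  qed
qed

lemma D2: "Dset 2 = {\<lambda>_. 0}"
proof
  show "Dset 2 \<subseteq> {\<lambda>_. 0}"
  proof
    fix d assume "d \<in> Dset 2"
    then obtain j where c: "cat 2 j d" unfolding Dset_def by blast
    have "2 \<le> j" by (rule cat_j2[OF _ c]) simp
    moreover have "j \<le> 2" using c by (simp add: cat_def)
    ultimately have "j = 2" by simp
    then have "d = (\<lambda>_. 0)" using c unfolding cat_def by (metis not_less)
    then show "d \<in> {\<lambda>_. 0}" by simp
  qed
  show "{\<lambda>_. 0} \<subseteq> Dset 2" unfolding Dset_def cat_def by auto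
qed

lemma D_card: "2 \<le> m \<Longrightarrow> finite (Dset m) \<and> card (Dset m) = 2 ^ (m - 2)"
proof (induction m rule: nat_induct_at_least)
  case base then show ?case using D2 by simp
next
  case (Suc m)
  have f: "finite (ext m ` Dset m)" "finite (shift ` Dset m)" using Suc.IH by auto
  have "card (Dset (Suc m)) = card (ext m ` Dset m) + card (shift ` Dset m)"
    unfolding D_split(1)[OF Suc.hyps] by (rule card_Un_disjoint[OF f D_split(2)[OF Suc.hyps]])
  also have "\<dots> = 2 * card (Dset m)"
    using card_image[OF D_split(3)[OF Suc.hyps]] card_image[OF D_split(4)[OF Suc.hyps]] by simp
  also have "\<dots> = 2 ^ (Suc m - 2)"
  proof -
    have "Suc m - 2 = Suc (m - 2)" using Suc.hyps by simp
    then show ?thesis using Suc.IH by simp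
  qed
  finally show ?case using f D_split(1)[OF Suc.hyps] by simp
qed

lemma N_bd:
  assumes m: "2 \<le> m" and c: "cat m j d" and u: "u < 2*m"
  shows "bd m u \<in> N m d \<longleftrightarrow> u < j"
proof
  have jm: "j \<le> m" using c by (simp add: cat_def)
  assume "u < j"
  then have "bd m u = {u, Suc u}" using bd_lt[of u m] jm m by simp
  moreover have "ed d u = {u, Suc u}" using cat_zero[OF c \<open>u < j\<close>] unfolding ed_def by simp
  moreover have "u < m" using \<open>u < j\<close> jm by simp
  ultimately show "bd m u \<in> N m d" unfolding N_def by (metis imageI lessThan_iff)
next
  assume "bd m u \<in> N m d"
  then obtain k where k: "k < m" "bd m u = ed d k" unfolding N_def by blast
  have dk: "d k \<le> k" using cat_lo[OF c k(1)] by simp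
  have lt: "k - d k < Suc k + d k" by simp
  show "u < j"
  proof (cases "Suc u < 2*m")
    case True
    then have "{u, Suc u} = {k - d k, Suc k + d k}" using k bd_lt unfolding ed_def by simp
    then have "u = k - d k" "Suc u = Suc k + d k" using lt by (auto simp: doubleton_eq_iff)
    then have "d k = 0" "u = k" using dk by auto
    then show ?thesis using cat_pos[OF c _ k(1)] by (cases "j \<le> k") auto
  next
    case False
    then have "u = 2*m - 1" using u by simp
    then have "{2*m - 1, 0} = {k - d k, Suc k + d k}" using k bd_last[of m] m unfolding ed_def by simp
    then have "k - d k = 0" "Suc k + d k = 2*m - 1" using lt by (auto simp: doubleton_eq_iff)
    then have "d k = k" "k = m - 1" using dk by auto
    moreover have "d k + 1 \<le> k \<or> d k = 0" using cat_bounds(2)[OF c _ k(1)] cat_zero[OF c] by (cases "j \<le> k") auto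
    ultimately show ?thesis using m by simp
  qed
qed

lemma N_determines:
  assumes c: "cat m j d" and c': "cat m j' d'" and eq: "N m d = N m d'"
  shows "d = d'"
proof
  fix k show "d k = d' k"
  proof (cases "k < m")
    case True
    then have "ed d k \<in> N m d'" using eq unfolding N_def by blast
    then obtain k' where k': "k' < m" "ed d k = ed d' k'" unfolding N_def by blast
    have "2*k+1 = 2*k'+1" using ed_sum[OF c True] ed_sum[OF c' k'(1)] k'(2) by simp
    then have "k = k'" by simp
    then have "{k - d k, Suc k + d k} = {k - d' k, Suc k + d' k}" using k'(2) unfolding ed_def by simp
    then have "Suc k + d k \<in> {k - d' k, Suc k + d' k}" by blast
    then show ?thesis by auto
  next
    case False then show ?thesis using c c' unfolding cat_def by auto
  qed
qed

lemma rotS0: "\<forall>e\<in>X. e \<subseteq> {..<2*m} \<Longrightarrow> rotS m 0 X = X"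
  using rotS_id[of X m 0] rotS_mod[of m "2*m" X] by simp

lemma inj_core:
  assumes m: "2 \<le> m" and s: "s \<in> {..<2*m}" "s' \<in> {..<2*m}" and dD: "d \<in> Dset m" "d' \<in> Dset m"
    and eq: "rotS m s (N m d) = rotS m s' (N m d')"
  shows "s = s' \<and> d = d'"
proof -
  obtain j j' where c: "cat m j d" and c': "cat m j' d'" using dD unfolding Dset_def by blast
  have m0: "0 < m" using m by simp
  have Ns: "\<forall>e\<in>N m d. e \<subseteq> {..<2*m}" "\<forall>e\<in>N m d'. e \<subseteq> {..<2*m}" using N_sub c c' by blast+
  define \<rho> where "\<rho> = (2*m - s + s') mod (2*m)"
  have \<rho>: "\<rho> < 2*m" unfolding \<rho>_def using m0 by simp
  have "rotS m (2*m - s mod (2*m) + s) (N m d) = N m d" by (rule rotS_id[OF Ns(1)])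
  then have "N m d = rotS m (2*m - s) (rotS m s (N m d))" using s by (simp add: rotS_add)
  also have "\<dots> = rotS m (2*m - s + s') (N m d')" unfolding eq by (simp add: rotS_add)
  also have "\<dots> = rotS m \<rho> (N m d')" unfolding \<rho>_def by (rule rotS_mod[symmetric])
  finally have Neq: "N m d = rotS m \<rho> (N m d')" .
  have Nsub': "\<forall>e\<in>N m d'. e \<subseteq> {..<2*m}" by (rule Ns(2))
  have mem: "bd m w \<in> N m d \<longleftrightarrow> bd m (w + 2*m - \<rho>) \<in> N m d'" for w
  proof -
    have r: "rot m \<rho> ` bd m (w + 2*m - \<rho>) = bd m w"
    proof -
      have "rot m \<rho> ` bd m (w + 2*m - \<rho>) = bd m (w + 2*m - \<rho> + \<rho>)" by (rule rot_bd)
      also have "w + 2*m - \<rho> + \<rho> = w + 2*m" using \<rho> by simp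
      finally show ?thesis using bd_add by simp
    qed
    show ?thesis
    proof
      assume "bd m w \<in> N m d"
      then obtain e where e: "e \<in> N m d'" "rot m \<rho> ` e = bd m w" using Neq unfolding rotS_def by auto
      then have "rot m \<rho> ` e = rot m \<rho> ` bd m (w + 2*m - \<rho>)" using r by simp
      then have "e = bd m (w + 2*m - \<rho>)"
        using inj_on_image_eq_iff[OF rot_inj] Nsub' e(1) bd_sub[OF m0] by metis
      then show "bd m (w + 2*m - \<rho>) \<in> N m d'" using e by simp
    next
      assume "bd m (w + 2*m - \<rho>) \<in> N m d'"
      then have "rot m \<rho> ` bd m (w + 2*m - \<rho>) \<in> rotS m \<rho> (N m d')" unfolding rotS_def by blast
      then show "bd m w \<in> N m d" using r Neq by simp
    qed
  qed
  have \<rho>0: "\<rho> = 0"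
  proof (rule ccontr)
    assume "\<rho> \<noteq> 0"
    have jm: "j \<le> m" "j' \<le> m" "1 \<le> j" using c c' by (auto simp: cat_def)
    have "bd m 0 \<in> N m d" using N_bd[OF m c, of 0] jm by simp
    then have "bd m (0 + 2*m - \<rho>) \<in> N m d'" using mem by blast
    then have a: "2*m - \<rho> < j'" using N_bd[OF m c', of "2*m - \<rho>"] \<open>\<rho> \<noteq> 0\<close> \<rho> by simp
    have "bd m (2*m - 1) \<notin> N m d" using N_bd[OF m c, of "2*m-1"] jm m by simp
    then have "bd m (2*m - 1 + 2*m - \<rho>) \<notin> N m d'" using mem by blast
    moreover have "bd m (2*m - 1 + 2*m - \<rho>) = bd m (2*m - 1 - \<rho>)"
    proof -
      have "2*m - 1 + 2*m - \<rho> = (2*m - 1 - \<rho>) + 2*m" using a jm \<rho> by simp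
      then show ?thesis using bd_add by simp
    qed
    moreover have "bd m (2*m - 1 - \<rho>) \<in> N m d'" using N_bd[OF m c', of "2*m - 1 - \<rho>"] a \<rho> by simp
    ultimately show False by simp
  qed
  then have "N m d = N m d'" using Neq rotS0[OF Nsub'] by simp
  then show "s = s' \<and> d = d'"
  proof (intro conjI)
    show "d = d'" using N_determines[OF c c'] \<open>N m d = N m d'\<close> .
    show "s = s'"
    proof (cases "s \<le> s'")
      case True
      then have "(2*m + (s' - s)) mod (2*m) = 0" using \<rho>0 unfolding \<rho>_def using s by simp
      then have "(s' - s) mod (2*m) = 0" by simp
      then show ?thesis using s True by simp
    next
      case False
      then have "(2*m - s + s') mod (2*m) = 2*m - s + s'" using s by simp
      then show ?thesis using \<rho>0 False s unfolding \<rho>_def by simp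
    qed
  qed
qed

lemma inj_param:
  assumes m: "2 \<le> m"
  shows "inj_on (\<lambda>(s, d). rotS m s (N m d)) ({..<2*m} \<times> Dset m)"
proof (rule inj_onI)
  fix p p' assume p: "p \<in> {..<2*m} \<times> Dset m" "p' \<in> {..<2*m} \<times> Dset m"
    and eq: "(\<lambda>(s, d). rotS m s (N m d)) p = (\<lambda>(s, d). rotS m s (N m d)) p'"
  obtain s d s' d' where pp: "p = (s, d)" "p' = (s', d')" by (cases p, cases p') auto
  show "p = p'" using inj_core[OF m, of s s' d d'] p eq unfolding pp by auto
qed

theorem count:
  assumes m: "2 \<le> m"
  shows "card {B. is_blocker m B} = m * 2 ^ (m - 1)"
proof -
  have "{B. is_blocker m B} = (\<lambda>(s, d). rotS m s (N m d)) ` ({..<2*m} \<times> Dset m)"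
    using char[OF m] unfolding Dset_def by auto
  then have "card {B. is_blocker m B} = card ({..<2*m} \<times> Dset m)"
    using card_image[OF inj_param[OF m]] by simp
  also have "\<dots> = 2*m * 2^(m-2)" using D_card[OF m] by (simp add: card_cartesian_product)
  also have "\<dots> = m * 2^(m-1)"
  proof -
    have "m - 1 = Suc (m - 2)" using m by simp
    then show ?thesis by simp
  qed
  finally show ?thesis .
qed

theorem mainTheorem2:
  fixes m :: nat
  assumes "m \<ge> 2"
  shows "card {B. is_blocker m B} = m * 2 ^ (m - 1)"
  using count[OF assms] .

end
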